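(* Let $k\geq 2$. Then $(\psi_k,\mathbf{d}_k)$ is a $2$-dimensional catalytic embedding from the set of unitary matrices with entries in $\mathcal{R}_{3\cdot 2^k}$ to the set of unitary matrices with entries in $\mathcal{R}_{3\cdot 2^{k-1}}$.
   Context: $\zeta_n=e^{2\pi i/n}$ and $\mathcal{R}_n$ is the smallest subring of $\mathbb{C}$ containing $1/2$ and $\zeta_n$. Every matrix $M$ with entries in $\mathcal{R}_{3\cdot 2^k}$ can be uniquely written as $M=A+B\zeta_{3\cdot2^k}$ with $A,B$ matrices over $\mathcal{R}_{3\cdot 2^{k-1}}$; define $\psi_k(M)=A\otimes I_2+B\otimes\Gamma_k$ with $\Gamma_k=\begin{bmatrix}0&1\\ \zeta_{3\cdot 2^{k-1}}&0\end{bmatrix}$, and $\mathbf{d}_k=\frac{1}{\sqrt2}\begin{bmatrix}1\\ \zeta_{3\cdot2^k}\end{bmatrix}$. For sets of unitary matrices $\mathcal{U},\mathcal{V}$, an $m$-dimensional catalytic embedding from $\mathcal{U}$ into $\mathcal{V}$ is a pair $(\phi,\mathbf{c})$ with $\phi:\mathcal{U}\to\mathcal{V}$ a function and $\mathbf{c}\in\mathbb{C}^m$ a unit vector such that (1) if $U\in\mathcal{U}$ has dimension $d$ then $\phi(U)$ has dimension $md$, and (2) $\phi(U)(\mathbf{u}\otimes\mathbf{c})=(U\mathbf{u})\otimes\mathbf{c}$ for all $\mathbf{u}\in\mathbb{C}^d$. *)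

theory Defs
  imports Complex_Main "Jordan_Normal_Form.Matrix"
begin

definition zeta :: "nat \<Rightarrow> complex" where
  "zeta n = exp (2 * of_real pi * \<i> / of_nat n)"

definition is_subring :: "complex set \<Rightarrow> bool" where
  "is_subring S \<longleftrightarrow> 0 \<in> S \<and> 1 \<in> S \<and>
     (\<forall>x\<in>S. \<forall>y\<in>S. x + y \<in> S \<and> x - y \<in> S \<and> x * y \<in> S)"

definition Rring :: "nat \<Rightarrow> complex set" where
  "Rring n = \<Inter> {S. is_subring S \<and> 1/2 \<in> S \<and> zeta n \<in> S}"

definition entries_in :: "complex mat \<Rightarrow> complex set \<Rightarrow> bool" where
  "entries_in M S \<longleftrightarrow> (\<forall>i<dim_row M. \<forall>j<dim_col M. M $$ (i,j) \<in> S)"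

definition adj :: "complex mat \<Rightarrow> complex mat" where
  "adj M = mat (dim_col M) (dim_row M) (\<lambda>(i,j). cnj (M $$ (j,i)))"

definition unitary_mat :: "complex mat \<Rightarrow> bool" where
  "unitary_mat U \<longleftrightarrow> dim_row U = dim_col U \<and>
     adj U * U = 1\<^sub>m (dim_row U) \<and> U * adj U = 1\<^sub>m (dim_row U)"

definition unitaries_over :: "nat \<Rightarrow> complex mat set" where
  "unitaries_over n = {U. unitary_mat U \<and> entries_in U (Rring n)}"

definition kron :: "complex mat \<Rightarrow> complex mat \<Rightarrow> complex mat" where
  "kron A B = mat (dim_row A * dim_row B) (dim_col A * dim_col B)
     (\<lambda>(i,j). A $$ (i div dim_row B, j div dim_col B) * B $$ (i mod dim_row B, j mod dim_col B))"

definition kron_vec :: "complex vec \<Rightarrow> complex vec \<Rightarrow> complex vec" where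
  "kron_vec u v = vec (dim_vec u * dim_vec v)
     (\<lambda>i. u $ (i div dim_vec v) * v $ (i mod dim_vec v))"

definition catalytic_embedding ::
  "nat \<Rightarrow> complex mat set \<Rightarrow> complex mat set \<Rightarrow> (complex mat \<Rightarrow> complex mat) \<Rightarrow> complex vec \<Rightarrow> bool" where
  "catalytic_embedding m UU VV phi c \<longleftrightarrow>
     dim_vec c = m \<and> (\<Sum>i<dim_vec c. (cmod (c $ i))^2) = 1 \<and>
     (\<forall>U\<in>UU. phi U \<in> VV \<and>
        (\<forall>d. U \<in> carrier_mat d d \<longrightarrow>
           phi U \<in> carrier_mat (m * d) (m * d) \<and>
           (\<forall>u \<in> carrier_vec d. phi U *\<^sub>v kron_vec u c = kron_vec (U *\<^sub>v u) c)))"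

definition decomp :: "nat \<Rightarrow> complex mat \<Rightarrow> complex mat \<times> complex mat" where
  "decomp k M = (THE (A,B). A \<in> carrier_mat (dim_row M) (dim_col M) \<and>
       B \<in> carrier_mat (dim_row M) (dim_col M) \<and>
       entries_in A (Rring (3 * 2^(k-1))) \<and> entries_in B (Rring (3 * 2^(k-1))) \<and>
       M = A + zeta (3 * 2^k) \<cdot>\<^sub>m B)"

definition Gamma :: "nat \<Rightarrow> complex mat" where
  "Gamma k = mat_of_rows_list 2 [[0, 1], [zeta (3 * 2^(k-1)), 0]]"

definition psi :: "nat \<Rightarrow> complex mat \<Rightarrow> complex mat" where
  "psi k M = (let (A, B) = decomp k M in kron A (1\<^sub>m 2) + kron B (Gamma k))"

definition dvec :: "nat \<Rightarrow> complex vec" where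
  "dvec k = vec_of_list [1 / of_real (sqrt 2), zeta (3 * 2^k) / of_real (sqrt 2)]"

end

theory Submission
  imports Defs "HOL-Computational_Algebra.Primes"
begin

section \<open>Roots of unity\<close>

lemma zeta_pow: "zeta m ^ j = exp (of_nat j * (2 * of_real pi * \<i> / of_nat m))"
  unfolding zeta_def by (simp only: exp_of_nat_mult)

lemma zeta_sq: assumes "m > 0" shows "zeta (2*m) ^ 2 = zeta m"
proof -
  have "zeta (2*m) ^ 2 = exp (of_nat 2 * (2 * of_real pi * \<i> / of_nat (2*m)))"
    by (rule zeta_pow)
  also have "of_nat 2 * (2 * of_real pi * \<i> / of_nat (2*m)) = 2 * of_real pi * \<i> / (of_nat m :: complex)"
    using assms by (simp add: field_simps)
  finally show ?thesis unfolding zeta_def .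
qed

lemma zeta_pow_self: assumes "m > 0" shows "zeta m ^ m = 1"
proof -
  have "zeta m ^ m = exp (of_nat m * (2 * of_real pi * \<i> / of_nat m))" by (rule zeta_pow)
  also have "of_nat m * (2 * of_real pi * \<i> / of_nat m) = 2 * of_real pi * \<i>"
    using assms by (simp add: field_simps)
  finally show ?thesis by simp
qed

lemma zeta_half: assumes "h > 0" shows "zeta (2*h) ^ h = -1"
proof -
  have "zeta (2*h) ^ h = exp (of_nat h * (2 * of_real pi * \<i> / of_nat (2*h)))" by (rule zeta_pow)
  also have "of_nat h * (2 * of_real pi * \<i> / of_nat (2*h)) = of_real pi * \<i>"
    using assms by (simp add: field_simps)
  finally show ?thesis by simp
qed

lemma norm_zeta: "cmod (zeta m) = 1"
  unfolding zeta_def by (simp add: norm_exp_eq_Re)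

lemma cnj_zeta: "cnj (zeta m) * zeta m = 1"
  by (metis complex_norm_square mult.commute norm_zeta of_real_1 one_power2)

lemma zeta_angle: "zeta m = Complex (cos (2*pi/m)) (sin (2*pi/m))"
proof -
  have "zeta m = cis (2*pi/m)" unfolding zeta_def cis_conv_exp
    by (simp add: field_simps)
  thus ?thesis by (simp add: cis.code)
qed

lemma zeta6: "zeta 6 = Complex (1/2) (sqrt 3 / 2)"
proof -
  have "2*pi/6 = pi/3" by simp
  thus ?thesis using zeta_angle[of 6] by (simp add: cos_60 sin_60)
qed

lemma zeta12: "zeta 12 = Complex (sqrt 3 / 2) (1/2)"
proof -
  have "2*pi/12 = pi/6" by simp
  thus ?thesis using zeta_angle[of 12] by (simp add: cos_30 sin_30)
qed

lemma zeta24: "zeta 24 = Complex (cos (pi/12)) (sin (pi/12)) \<and> (cos (pi/12))^2 = 1/2 + sqrt 3 / 4"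
proof -
  have "2*pi/24 = pi/12" by simp
  moreover have "cos (2 * (pi/12)) = 2 * (cos (pi/12))^2 - 1" by (rule cos_double_cos)
  moreover have "2 * (pi/12) = pi/6" by simp
  ultimately have "sqrt 3 / 2 = 2 * (cos (pi/12))^2 - 1" using cos_30 by simp
  hence "(cos (pi/12))^2 = 1/2 + sqrt 3 / 4" by (simp add: field_simps)
  thus ?thesis using zeta_angle[of 24] \<open>2*pi/24 = pi/12\<close> by simp
qed

section \<open>Irrationality\<close>

lemma no_rat_sq:
  assumes x: "x \<in> \<rat>" and xs: "x^2 = real N" and p: "prime p" "p dvd N" "\<not> p^2 dvd N"
  shows False
proof -
  obtain m n where n: "n \<noteq> 0" and mn: "\<bar>x\<bar> = real m / real n" and cop: "coprime m n"
    using x by (rule Rats_abs_nat_div_natE)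
  have "real m ^ 2 = real N * real n ^ 2"
    using mn xs n by (metis (no_types, lifting) divide_eq_eq of_nat_eq_0_iff power2_abs
        power_divide zero_eq_power2)
  hence eq: "m^2 = N * n^2" by (metis of_nat_eq_iff of_nat_mult of_nat_power)
  have "p dvd m^2" using eq p(2) by simp
  hence "p dvd m" using p(1) prime_dvd_power by blast
  then obtain m' where m': "m = p * m'" by blast
  obtain N' where N': "N = p * N'" using p(2) by blast
  have "\<not> p dvd N'" using p(3) N' by (simp add: power2_eq_square)
  have "p^2 * m'^2 = p * N' * n^2" using eq m' N' by (simp add: power_mult_distrib)
  hence "p * m'^2 = N' * n^2" using p(1) by (simp add: power2_eq_square prime_gt_0_nat)
  hence "p dvd N' * n^2" by (metis dvd_triv_left)
  hence "p dvd n^2" using \<open>\<not> p dvd N'\<close> p(1) prime_dvd_mult_iff by blast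
  hence "p dvd n" using p(1) prime_dvd_power by blast
  hence "p dvd 1" using \<open>p dvd m\<close> cop by (meson coprime_common_divisor)
  thus False using p(1) by simp
qed

lemma prime3: "prime (3::nat)"
proof -
  have "\<forall>n\<in>{2..<3}. \<not> n dvd (3::nat)"
  proof
    fix n assume "n \<in> {2..<(3::nat)}" hence "n = 2" by auto
    thus "\<not> n dvd 3" by simp
  qed
  thus ?thesis by (simp add: prime_nat_iff')
qed

lemma no_rat_sq2: "(x::real) \<in> \<rat> \<Longrightarrow> x^2 = 2 \<Longrightarrow> False"
  using no_rat_sq[of x 2 2] two_is_prime_nat by simp
lemma no_rat_sq3: "(x::real) \<in> \<rat> \<Longrightarrow> x^2 = 3 \<Longrightarrow> False"
  using no_rat_sq[of x 3 3] prime3 by simp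
lemma no_rat_sq6: "(x::real) \<in> \<rat> \<Longrightarrow> x^2 = 6 \<Longrightarrow> False"
  using no_rat_sq[of x 6 2] two_is_prime_nat by simp

lemma sqrt3_irr: "sqrt 3 \<notin> \<rat>"
  using no_rat_sq3[of "sqrt 3"] by auto

lemma indep3: fixes p q :: real assumes "p \<in> \<rat>" "q \<in> \<rat>" "p + q * sqrt 3 = 0" shows "p = 0 \<and> q = 0"
proof (cases "q = 0")
  case True thus ?thesis using assms by simp
next
  case False
  hence "sqrt 3 = - p / q" using assms(3) by (simp add: field_simps)
  hence "sqrt 3 \<in> \<rat>" using assms by simp
  thus ?thesis using sqrt3_irr by blast
qed

inductive_set QR :: "complex \<Rightarrow> complex set" for w where
  QR_rat: "q \<in> \<rat> \<Longrightarrow> q \<in> QR w"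
| QR_gen: "w \<in> QR w"
| QR_add: "x \<in> QR w \<Longrightarrow> y \<in> QR w \<Longrightarrow> x + y \<in> QR w"
| QR_mult: "x \<in> QR w \<Longrightarrow> y \<in> QR w \<Longrightarrow> x * y \<in> QR w"

lemma QR_0: "0 \<in> QR w" and QR_1: "1 \<in> QR w" and QR_num: "numeral n \<in> QR w"
  by (auto intro: QR_rat)

lemma QR_uminus: "x \<in> QR w \<Longrightarrow> - x \<in> QR w"
proof -
  assume "x \<in> QR w"
  moreover have "-1 \<in> QR w" by (rule QR_rat) simp
  ultimately have "(-1) * x \<in> QR w" by (rule QR_mult[rotated])
  thus ?thesis by simp
qed

lemma QR_diff: "x \<in> QR w \<Longrightarrow> y \<in> QR w \<Longrightarrow> x - y \<in> QR w"
  using QR_add[of x w "-y"] QR_uminus by simp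

lemma QR_pow: "x \<in> QR w \<Longrightarrow> x ^ n \<in> QR w"
  by (induction n) (auto intro: QR_mult QR_1)

lemmas QR_intros = QR_0 QR_1 QR_num QR_gen QR_add QR_mult QR_diff QR_uminus QR_pow

lemma QR_decomp:
  assumes "w1^2 = w0" "x \<in> QR w1"
  shows "\<exists>a\<in>QR w0. \<exists>b\<in>QR w0. x = a + w1 * b"
  using assms(2)
proof induction
  case (QR_rat q)
  have "q = q + w1 * 0" by simp
  moreover have "q \<in> QR w0" using QR_rat.hyps by (rule QR.QR_rat)
  ultimately show ?case using QR_0 by blast
next
  case QR_gen
  thus ?case by (intro bexI[of _ 0] bexI[of _ 1]) (auto intro: QR_0 QR_1)
next
  case (QR_add x y)
  then obtain a b c d where "a \<in> QR w0" "b \<in> QR w0" "c \<in> QR w0" "d \<in> QR w0"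
     "x = a + w1 * b" "y = c + w1 * d" by blast
  hence "x + y = (a+c) + w1 * (b+d)" "a + c \<in> QR w0" "b + d \<in> QR w0"
    by (simp_all add: QR.QR_add algebra_simps)
  thus ?case by blast
next
  case (QR_mult x y)
  then obtain a b c d where abcd: "a \<in> QR w0" "b \<in> QR w0" "c \<in> QR w0" "d \<in> QR w0"
     "x = a + w1 * b" "y = c + w1 * d" by blast
  have "x * y = (a*c + w0*(b*d)) + w1 * (a*d + b*c)"
    using abcd(5,6) assms(1)[symmetric] by (simp add: algebra_simps power2_eq_square)
  moreover have "a*c + w0*(b*d) \<in> QR w0" "a*d + b*c \<in> QR w0"
    using abcd by (auto intro!: QR_intros)
  ultimately show ?case by blast
qed

lemma step_abs:
  fixes w0 w1 w2 u :: complex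
  assumes w1: "w1^2 = w0" and w2: "w2^2 = w1"
  and G1: "\<forall>a\<in>QR w0. \<forall>b\<in>QR w0. a + w1*b = 0 \<longrightarrow> b = 0"
  and u: "u \<in> QR w0" "u^2 = -1"
  shows "\<forall>a\<in>QR w1. \<forall>b\<in>QR w1. a + w2*b = 0 \<longrightarrow> b = 0"
proof (intro ballI impI)
  have G: "a = 0 \<and> b = 0" if "a \<in> QR w0" "b \<in> QR w0" "a + w1*b = 0" for a b
    using G1 that by (metis add.right_neutral mult_zero_right)
  fix a b assume ab: "a \<in> QR w1" "b \<in> QR w1" "a + w2 * b = 0"
  show "b = 0"
  proof (rule ccontr)
    assume b0: "b \<noteq> 0"
    have "a = - w2 * b" using ab(3) by (simp add: eq_neg_iff_add_eq_0 algebra_simps)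
    hence sq: "a^2 = w1 * b^2" using w2 by (simp add: power_mult_distrib)
    obtain a0 a1 where a01: "a0 \<in> QR w0" "a1 \<in> QR w0" "a = a0 + w1 * a1"
      using QR_decomp[OF w1 ab(1)] by blast
    obtain b0 b1 where b01: "b0 \<in> QR w0" "b1 \<in> QR w0" "b = b0 + w1 * b1"
      using QR_decomp[OF w1 ab(2)] by blast
    have "(a0^2 + w0*a1^2 - 2*w0*b0*b1) + w1 * (2*a0*a1 - b0^2 - w0*b1^2) = a^2 - w1 * b^2"
      unfolding a01(3) b01(3) w1[symmetric] by (simp add: power2_eq_square algebra_simps)
    also have "\<dots> = 0" using sq by simp
    finally have zz: "(a0^2 + w0*a1^2 - 2*w0*b0*b1) + w1 * (2*a0*a1 - b0^2 - w0*b1^2) = 0" .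
    have m1: "a0^2 + w0*a1^2 - 2*w0*b0*b1 \<in> QR w0" and m2: "2*a0*a1 - b0^2 - w0*b1^2 \<in> QR w0"
      using a01 b01 by (auto intro!: QR_intros)
    have z: "a0^2 + w0*a1^2 - 2*w0*b0*b1 = 0" "2*a0*a1 - b0^2 - w0*b1^2 = 0"
      using G[OF m1 m2 zz] by simp_all
    have "2*a0*a1 - (b0^2 + w0*b1^2) = 0" using z(2) by (simp add: diff_diff_eq)
    hence e2: "2*a0*a1 = b0^2 + w0*b1^2" by (metis right_minus_eq)
    have e1: "a0^2 + w0*a1^2 = 2*w0*b0*b1" using z(1) by (metis right_minus_eq)
    note e = e1 e2
    define E where "E = a0^2 - w0*a1^2"
    define F where "F = b0^2 - w0*b1^2"
    have "E^2 = (a0^2 + w0*a1^2)^2 - w0 * (2*a0*a1)^2" unfolding E_def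
      by (simp add: power2_eq_square algebra_simps)
    also have "\<dots> = (2*w0*b0*b1)^2 - w0 * (b0^2 + w0*b1^2)^2" using e by simp
    also have "\<dots> = - w0 * F^2" unfolding F_def
      by (simp add: power2_eq_square algebra_simps)
    finally have EF: "E^2 = - w0 * F^2" .
    have EF_in: "E \<in> QR w0" "F \<in> QR w0" unfolding E_def F_def using a01 b01 by (auto intro!: QR_intros)
    have "F \<noteq> 0"
    proof
      assume "F = 0"
      have "F = (b0 - w1*b1) * b" unfolding F_def b01(3) w1[symmetric] by (simp add: power2_eq_square algebra_simps)
      hence "b0 - w1*b1 = 0" using b0 \<open>F = 0\<close> by simp
      hence "b0 + w1 * (-b1) = 0" by simp
      hence "b0 = 0 \<and> -b1 = 0" using G b01 QR_uminus by blast
      thus False using b0 b01(3) by simp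
    qed
    have "(u*E - w1*F) * (u*E + w1*F) = u^2 * E^2 - w1^2 * F^2" by (simp add: power2_eq_square algebra_simps)
    also have "\<dots> = 0" using EF u(2) w1 by simp
    finally have "u*E - w1*F = 0 \<or> u*E + w1*F = 0" by simp
    hence "u*E + w1*(-F) = 0 \<or> u*E + w1*F = 0" by simp
    moreover have "u*E \<in> QR w0" "-F \<in> QR w0" using EF_in u(1) by (auto intro!: QR_intros)
    ultimately have "F = 0 \<or> -F = 0" using G EF_in by blast
    thus False using \<open>F \<noteq> 0\<close> by simp
  qed
qed

lemma of_rat_complex: "(of_rat r :: complex) = complex_of_real (of_rat r)"
  by (cases r) (simp add: of_rat_rat)

lemma Rats_complex: "(q::complex) \<in> \<rat> \<Longrightarrow> \<exists>r\<in>\<rat>. q = complex_of_real r"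
proof -
  assume "q \<in> \<rat>"
  then obtain r where "q = of_rat r" by (rule Rats_cases)
  hence "q = complex_of_real (of_rat r)" by (simp add: of_rat_complex)
  thus ?thesis by (intro bexI[of _ "of_rat r"]) simp_all
qed

lemma s3: "sqrt 3 * sqrt 3 = 3" by simp
lemma s3': "sqrt 3 * (sqrt 3 * x) = 3 * x" by (simp add: mult.assoc[symmetric])

lemma QR6_form: "x \<in> QR (zeta 6) \<Longrightarrow> \<exists>p q. p \<in> \<rat> \<and> q \<in> \<rat> \<and> x = Complex p (q * sqrt 3)"
proof (induction rule: QR.induct)
  case (QR_rat q)
  then obtain r where "r \<in> \<rat>" "q = complex_of_real r" using Rats_complex by blast
  moreover have "q = Complex r (0 * sqrt 3)" using \<open>q = complex_of_real r\<close> by (simp add: complex_of_real_def)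
  ultimately show ?case using Rats_0 by blast
next
  case QR_gen
  show ?case by (rule exI[of _ "1/2"], rule exI[of _ "1/2"]) (simp add: zeta6)
next
  case (QR_add x y)
  obtain p q where "p \<in> \<rat>" "q \<in> \<rat>" "x = Complex p (q * sqrt 3)" using QR_add.IH(1) by blast
  moreover obtain p' q' where "p' \<in> \<rat>" "q' \<in> \<rat>" "y = Complex p' (q' * sqrt 3)" using QR_add.IH(2) by blast
  ultimately have "x + y = Complex (p+p') ((q+q') * sqrt 3)" "p+p' \<in> \<rat>" "q+q' \<in> \<rat>"
    by (simp_all add: complex_eq_iff algebra_simps)
  thus ?case by blast
next
  case (QR_mult x y)
  obtain p q where "p \<in> \<rat>" "q \<in> \<rat>" "x = Complex p (q * sqrt 3)" using QR_mult.IH(1) by blast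
  moreover obtain p' q' where "p' \<in> \<rat>" "q' \<in> \<rat>" "y = Complex p' (q' * sqrt 3)" using QR_mult.IH(2) by blast
  ultimately have "x * y = Complex (p*p' - 3*q*q') ((p*q'+q*p') * sqrt 3)" "p*p' - 3*q*q' \<in> \<rat>" "p*q'+q*p' \<in> \<rat>"
    by (simp_all add: complex_eq_iff algebra_simps s3 s3')
  thus ?case by blast
qed

lemma G2: "\<forall>a\<in>QR (zeta 6). \<forall>b\<in>QR (zeta 6). a + zeta 12 * b = 0 \<longrightarrow> b = 0"
proof (intro ballI impI)
  fix a b assume a: "a \<in> QR (zeta 6)" and b: "b \<in> QR (zeta 6)" and ab: "a + zeta 12 * b = 0"
  obtain p q where pq: "p \<in> \<rat>" "q \<in> \<rat>" "b = Complex p (q * sqrt 3)" using QR6_form[OF b] by blast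
  obtain p' q' where pq': "p' \<in> \<rat>" "q' \<in> \<rat>" "a = Complex p' (q' * sqrt 3)" using QR6_form[OF a] by blast
  have re: "Re (a + zeta 12 * b) = 0" and im: "Im (a + zeta 12 * b) = 0" using ab by simp_all
  have "p' + ((p - q)/2) * sqrt 3 = 0" using re unfolding pq(3) pq'(3) zeta12
    by (simp add: algebra_simps) (simp add: field_simps)
  hence "(p - q)/2 = 0" using indep3[of p' "(p-q)/2"] pq pq' by simp
  moreover have "(3*q + p)/2 + q' * sqrt 3 = 0" using im unfolding pq(3) pq'(3) zeta12
    by (simp add: algebra_simps s3 s3') (simp add: field_simps)
  hence "(3*q + p)/2 = 0" using indep3[of "(3*q + p)/2" q'] pq pq' by simp
  ultimately have "p = 0" "q = 0" by simp_all
  thus "b = 0" using pq(3) by (simp add: complex_eq_iff)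
qed

definition inK :: "real \<Rightarrow> bool" where
  "inK t \<longleftrightarrow> (\<exists>p q. p \<in> \<rat> \<and> q \<in> \<rat> \<and> t = p + q * sqrt 3)"

lemma inK_rat: "r \<in> \<rat> \<Longrightarrow> inK r"
  unfolding inK_def by (rule exI[of _ r], rule exI[of _ 0]) simp

lemma inK_s3: "inK (sqrt 3 / 2)"
  unfolding inK_def by (rule exI[of _ 0], rule exI[of _ "1/2"]) simp

lemma inK_add: "inK x \<Longrightarrow> inK y \<Longrightarrow> inK (x + y)"
  unfolding inK_def
  apply clarify
  subgoal for p p' q q' by (rule exI[of _ "p+p'"], rule exI[of _ "q+q'"]) (simp add: algebra_simps)
  done

lemma inK_mult: "inK x \<Longrightarrow> inK y \<Longrightarrow> inK (x * y)"
  unfolding inK_def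
  apply clarify
  subgoal for p p' q q' by (rule exI[of _ "p*p' + 3*q*q'"], rule exI[of _ "p*q'+q*p'"])
      (simp add: algebra_simps s3 s3')
  done

lemma inK_uminus: "inK x \<Longrightarrow> inK (- x)"
  unfolding inK_def
  apply clarify
  subgoal for p q by (rule exI[of _ "-p"], rule exI[of _ "-q"]) simp
  done

lemma inK_inverse: "inK x \<Longrightarrow> inK (inverse x)"
proof -
  assume "inK x"
  then obtain p q where pq: "p \<in> \<rat>" "q \<in> \<rat>" "x = p + q * sqrt 3" unfolding inK_def by blast
  show ?thesis
  proof (cases "x = 0")
    case True thus ?thesis using inK_rat[of 0] by simp
  next
    case False
    have d: "p^2 - 3*q^2 \<noteq> 0"
    proof
      assume h: "p^2 - 3*q^2 = 0"
      show False
      proof (cases "q = 0")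
        case True thus False using h False pq by simp
      next
        case q0: False
        have "(p/q)^2 = 3" using h q0 by (simp add: field_simps power_divide)
        thus False using no_rat_sq3[of "p/q"] pq by simp
      qed
    qed
    have pr: "x * (p - q * sqrt 3) = p^2 - 3*q^2"
      unfolding pq(3) by (simp add: algebra_simps power2_eq_square s3 s3')
    have "x * (p/(p^2 - 3*q^2) + (-q/(p^2 - 3*q^2)) * sqrt 3) = x * (p - q * sqrt 3) / (p^2 - 3*q^2)"
      by (simp add: algebra_simps add_divide_distrib diff_divide_distrib)
    also have "\<dots> = 1" using pr d by simp
    finally have "x * (p/(p^2 - 3*q^2) + (-q/(p^2 - 3*q^2)) * sqrt 3) = 1" .
    hence "inverse x = p/(p^2 - 3*q^2) + (-q/(p^2 - 3*q^2)) * sqrt 3"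
      by (metis inverse_unique)
    moreover have "p/(p^2 - 3*q^2) \<in> \<rat>" "-q/(p^2 - 3*q^2) \<in> \<rat>" using pq by simp_all
    ultimately show ?thesis unfolding inK_def by blast
  qed
qed

lemma inK_diff: "inK x \<Longrightarrow> inK y \<Longrightarrow> inK (x - y)"
  using inK_add[of x "-y"] inK_uminus[of y] by simp

lemma inK_divide: "inK x \<Longrightarrow> inK y \<Longrightarrow> inK (x / y)"
  by (simp add: divide_inverse inK_mult inK_inverse)

lemma QR12_form: "x \<in> QR (zeta 12) \<Longrightarrow> \<exists>P Q. inK P \<and> inK Q \<and> x = Complex P Q"
proof (induction rule: QR.induct)
  case (QR_rat q)
  then obtain r where "r \<in> \<rat>" "q = complex_of_real r" using Rats_complex by blast
  moreover have "q = Complex r 0" using \<open>q = complex_of_real r\<close> by (simp add: complex_of_real_def)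
  ultimately show ?case using inK_rat[of r] inK_rat[OF Rats_0] by blast
next
  case QR_gen
  show ?case by (rule exI[of _ "sqrt 3/2"], rule exI[of _ "1/2"]) (simp add: zeta12 inK_s3 inK_rat)
next
  case (QR_add x y)
  obtain p q where "inK p" "inK q" "x = Complex p q" using QR_add.IH(1) by blast
  moreover obtain p' q' where "inK p'" "inK q'" "y = Complex p' q'" using QR_add.IH(2) by blast
  ultimately have "x + y = Complex (p+p') (q+q')" "inK (p+p')" "inK (q+q')" by (simp_all add: inK_add complex_eq_iff)
  thus ?case by blast
next
  case (QR_mult x y)
  obtain p q where "inK p" "inK q" "x = Complex p q" using QR_mult.IH(1) by blast
  moreover obtain p' q' where "inK p'" "inK q'" "y = Complex p' q'" using QR_mult.IH(2) by blast
  ultimately have "x * y = Complex (p*p' + - (q*q')) (p*q'+q*p')" "inK (p*p' + - (q*q'))" "inK (p*q'+q*p')"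
    by (simp_all add: inK_add inK_mult inK_uminus inK_diff complex_eq_iff)
  thus ?case by blast
qed

lemma quartic_contra:
  fixes x y :: real
  assumes "x \<in> \<rat>" "x^2 + 3*y^2 = 1/2" "2*x*y = 1/4"
  shows False
proof -
  have "x*y = 1/8" using assms(3) unfolding mult.assoc by linarith
  hence "(x*y)^2 = (1/8)^2" by simp
  hence "(x*y)^2 = 1/64" by (simp add: power_divide)
  hence "x^2 * y^2 = 1/64" by (simp add: power_mult_distrib)
  hence "(8*x^2 - 1)*(8*x^2 - 3) = 64 * x^2 * (x^2 + 3*y^2) - 32*x^2 + 3 - 192 * (x^2*y^2)"
    by (simp add: algebra_simps power2_eq_square)
  also have "\<dots> = 0"
  proof -
    have "64 * x^2 * (x^2 + 3*y^2) = 32 * x^2" using assms(2) by simp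
    moreover have "192 * (x^2*y^2) = 3" using \<open>x^2 * y^2 = 1/64\<close> by simp
    ultimately show ?thesis by linarith
  qed
  finally have "8*x^2 = 1 \<or> 8*x^2 = 3" by simp
  hence "(4*x)^2 = 2 \<or> (4*x)^2 = 6" by (auto simp: power_mult_distrib)
  moreover have "4*x \<in> \<rat>" using assms(1) by simp
  ultimately show False using no_rat_sq2 no_rat_sq6 by blast
qed


lemma G3: "\<forall>a\<in>QR (zeta 12). \<forall>b\<in>QR (zeta 12). a + zeta 24 * b = 0 \<longrightarrow> b = 0"
proof (intro ballI impI)
  fix a b assume a: "a \<in> QR (zeta 12)" and b: "b \<in> QR (zeta 12)" and ab: "a + zeta 24 * b = 0"
  obtain P Q where PQ: "inK P" "inK Q" "b = Complex P Q" using QR12_form[OF b] by blast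
  obtain P' Q' where PQ': "inK P'" "inK Q'" "a = Complex P' Q'" using QR12_form[OF a] by blast
  define c where "c = cos (pi/12)"
  define s where "s = sin (pi/12)"
  have z24: "zeta 24 = Complex c s" and c2: "c^2 = 1/2 + sqrt 3 / 4"
    using zeta24 unfolding c_def s_def by auto
  have re: "P' + c*P - s*Q = 0" using arg_cong[OF ab, of Re] unfolding PQ(3) PQ'(3) z24 by simp
  have im: "Q' + s*P + c*Q = 0" using arg_cong[OF ab, of Im] unfolding PQ(3) PQ'(3) z24 by simp
  have "c * (P^2 + Q^2) = P * (P' + c*P - s*Q) + Q * (Q' + s*P + c*Q) - (P*P' + Q*Q')"
    by (simp add: algebra_simps power2_eq_square)
  hence cD: "c * (P^2 + Q^2) = - (P*P' + Q*Q')" using re im by simp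
  show "b = 0"
  proof (rule ccontr)
    assume "b \<noteq> 0"
    hence "P^2 + Q^2 \<noteq> 0" using PQ(3) by (simp add: complex_eq_iff)
    hence "c = - (P*P' + Q*Q') / (P^2 + Q^2)" using cD by (simp add: field_simps)
    moreover have "inK (- (P*P' + Q*Q') / (P*P + Q*Q))"
      using PQ PQ' by (intro inK_divide inK_uminus inK_add inK_mult)
    hence "inK (- (P*P' + Q*Q') / (P^2 + Q^2))" by (simp add: power2_eq_square)
    ultimately have "inK c" by simp
    then obtain x y where xy: "x \<in> \<rat>" "y \<in> \<rat>" "c = x + y * sqrt 3" unfolding inK_def by blast
    have "(x^2 + 3*y^2 - 1/2) + (2*x*y - 1/4) * sqrt 3 = c^2 - (1/2 + sqrt 3 / 4)"
      unfolding xy(3) by (simp add: algebra_simps power2_eq_square s3 s3')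
    also have "\<dots> = 0" using c2 by simp
    finally have "x^2 + 3*y^2 - 1/2 = 0 \<and> 2*x*y - 1/4 = 0"
      using indep3[of "x^2 + 3*y^2 - 1/2" "2*x*y - 1/4"] xy by simp
    thus False using quartic_contra[of x y] xy by simp
  qed
qed

section \<open>The rings R_n\<close>

lemma Rring_mem: "x \<in> Rring n \<longleftrightarrow> (\<forall>S. is_subring S \<and> 1/2 \<in> S \<and> zeta n \<in> S \<longrightarrow> x \<in> S)"
  unfolding Rring_def by blast

lemma Rring_min: "is_subring S \<Longrightarrow> 1/2 \<in> S \<Longrightarrow> zeta n \<in> S \<Longrightarrow> Rring n \<subseteq> S"
  unfolding Rring_def by blast

lemma Rring_0: "0 \<in> Rring n" and Rring_1: "1 \<in> Rring n"
  and Rring_half: "1/2 \<in> Rring n" and Rring_zeta: "zeta n \<in> Rring n"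
  unfolding Rring_mem is_subring_def by blast+

lemma Rring_add: "x \<in> Rring n \<Longrightarrow> y \<in> Rring n \<Longrightarrow> x + y \<in> Rring n"
  and Rring_diff: "x \<in> Rring n \<Longrightarrow> y \<in> Rring n \<Longrightarrow> x - y \<in> Rring n"
  and Rring_mult: "x \<in> Rring n \<Longrightarrow> y \<in> Rring n \<Longrightarrow> x * y \<in> Rring n"
  unfolding Rring_mem is_subring_def by blast+

lemma Rring_pow: "x \<in> Rring n \<Longrightarrow> x ^ j \<in> Rring n"
  by (induction j) (auto intro: Rring_mult Rring_1)

lemma Rring_sum: "finite S \<Longrightarrow> (\<And>x. x \<in> S \<Longrightarrow> f x \<in> Rring n) \<Longrightarrow> sum f S \<in> Rring n"
  by (induction S rule: finite_induct) (auto intro: Rring_add Rring_0)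

lemma subring_QR: "is_subring (QR w)"
  unfolding is_subring_def by (auto intro: QR_0 QR_1 QR.QR_add QR.QR_mult QR_diff)

lemma Rring_QR: "Rring n \<subseteq> QR (zeta n)"
proof (rule Rring_min[OF subring_QR])
  show "1/2 \<in> QR (zeta n)" by (rule QR.QR_rat) simp
  show "zeta n \<in> QR (zeta n)" by (rule QR.QR_gen)
qed

lemma cnj_zeta_pow: assumes "m > 0" shows "cnj (zeta m) = zeta m ^ (m - 1)"
proof -
  obtain m' where m': "m = Suc m'" using assms by (cases m) auto
  have "zeta m ^ m = zeta m * zeta m ^ (m-1)" unfolding m' by simp
  hence "cnj (zeta m) = cnj (zeta m) * zeta m ^ m" using zeta_pow_self[OF assms] by simp
  also have "\<dots> = (cnj (zeta m) * zeta m) * zeta m ^ (m-1)" using \<open>zeta m ^ m = _\<close> by simp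
  also have "\<dots> = zeta m ^ (m-1)" using cnj_zeta by simp
  finally show ?thesis .
qed

lemma Rring_cnj: assumes "m > 0" "x \<in> Rring m" shows "cnj x \<in> Rring m"
proof -
  let ?S = "{x. cnj x \<in> Rring m}"
  have "is_subring ?S" unfolding is_subring_def
    by (auto intro: Rring_0 Rring_1 Rring_add Rring_diff Rring_mult)
  moreover have "1/2 \<in> ?S" using Rring_half by simp
  moreover have "zeta m \<in> ?S" using cnj_zeta_pow[OF assms(1)] Rring_pow[OF Rring_zeta] by simp
  ultimately have "Rring m \<subseteq> ?S" by (rule Rring_min)
  thus ?thesis using assms(2) by blast
qed

lemma Rring_decomp:
  assumes "m > 0" "x \<in> Rring (2*m)"
  shows "\<exists>a\<in>Rring m. \<exists>b\<in>Rring m. x = a + zeta (2*m) * b"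
proof -
  let ?w = "zeta (2*m)"
  let ?S = "{x. \<exists>a\<in>Rring m. \<exists>b\<in>Rring m. x = a + ?w * b}"
  have w2: "?w^2 = zeta m" using zeta_sq[OF assms(1)] .
  have "is_subring ?S" unfolding is_subring_def
  proof (intro conjI ballI)
    show "0 \<in> ?S" using Rring_0 by (metis (mono_tags, lifting) add_0 mem_Collect_eq mult_zero_right)
    show "1 \<in> ?S" using Rring_0 Rring_1 by (metis (mono_tags, lifting) add_0_right mem_Collect_eq mult_zero_right)
    fix x y assume "x \<in> ?S" "y \<in> ?S"
    then obtain a b c d where abcd: "a \<in> Rring m" "b \<in> Rring m" "c \<in> Rring m" "d \<in> Rring m"
      "x = a + ?w * b" "y = c + ?w * d" by blast
    have "x + y = (a + c) + ?w * (b + d)" using abcd by (simp add: algebra_simps)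
    thus "x + y \<in> ?S" using abcd by (blast intro: Rring_add)
    have "x - y = (a - c) + ?w * (b - d)" using abcd by (simp add: algebra_simps)
    thus "x - y \<in> ?S" using abcd by (blast intro: Rring_diff)
    have "x * y = (a * c + zeta m * (b * d)) + ?w * (a * d + b * c)"
      using abcd w2[symmetric] by (simp add: algebra_simps power2_eq_square)
    moreover have "a * c + zeta m * (b * d) \<in> Rring m" "a * d + b * c \<in> Rring m"
      using abcd by (auto intro!: Rring_add Rring_mult Rring_zeta)
    ultimately show "x * y \<in> ?S" by blast
  qed
  moreover have "1/2 \<in> ?S"
  proof -
    have "1/2 = 1/2 + ?w * 0" by simp
    thus ?thesis using Rring_half Rring_0 by blast
  qed
  moreover have "?w \<in> ?S"
  proof -
    have "?w = 0 + ?w * 1" by simp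
    thus ?thesis using Rring_0 Rring_1 by blast
  qed
  ultimately have "Rring (2*m) \<subseteq> ?S" by (rule Rring_min)
  thus ?thesis using assms(2) by blast
qed

section \<open>Linear independence\<close>

lemma G_all:
  assumes "k \<ge> 2"
  shows "\<forall>a\<in>QR (zeta (3*2^(k-1))). \<forall>b\<in>QR (zeta (3*2^(k-1))). a + zeta (3*2^k) * b = 0 \<longrightarrow> b = 0"
proof -
  have P: "\<forall>a\<in>QR (zeta (3*2^(j+2))). \<forall>b\<in>QR (zeta (3*2^(j+2))). a + zeta (3*2^(j+3)) * b = 0 \<longrightarrow> b = 0" for j
  proof (induction j)
    case 0 show ?case using G3 by simp
  next
    case (Suc j)
    have n1: "(3::nat)*2^(j+3) = 2*(3*2^(j+2))" "(3::nat)*2^(j+4) = 2*(3*2^(j+3))"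
      "(3::nat)*2^(j+2) = 2*(3*2^(j+1))" by (simp_all add: power_add)
    have e1: "zeta (3*2^(j+3)) ^ 2 = zeta (3*2^(j+2))" unfolding n1(1) by (rule zeta_sq) simp
    have e2: "zeta (3*2^(j+4)) ^ 2 = zeta (3*2^(j+3))" unfolding n1(2) by (rule zeta_sq) simp
    have u: "zeta (3*2^(j+2)) ^ (3*2^j) \<in> QR (zeta (3*2^(j+2)))" by (intro QR_pow QR.QR_gen)
    have "(zeta (3*2^(j+2)) ^ (3*2^j))^2 = zeta (3*2^(j+2)) ^ (3*2^(j+1))"
      by (simp add: power_mult[symmetric] mult.commute mult.left_commute)
    also have "\<dots> = -1" unfolding n1(3) by (rule zeta_half) simp
    finally have u2: "(zeta (3*2^(j+2)) ^ (3*2^j))^2 = -1" .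
    have ee: "Suc j + 2 = j + 3" "Suc j + 3 = j + 4" by simp_all
    show ?case unfolding ee by (rule step_abs[OF e1 e2 Suc.IH u u2])
  qed
  show ?thesis
  proof (cases "k = 2")
    case True thus ?thesis using G2 by simp
  next
    case False
    hence "k = (k-3) + 3" "k - 1 = (k-3) + 2" using assms by simp_all
    thus ?thesis using P[of "k-3"] by metis
  qed
qed

lemma uniq:
  assumes "k \<ge> 2" "a \<in> Rring (3*2^(k-1))" "b \<in> Rring (3*2^(k-1))" "a + zeta (3*2^k) * b = 0"
  shows "a = 0 \<and> b = 0"
proof -
  have "b = 0" using G_all[OF assms(1)] assms(2-4) Rring_QR by blast
  thus ?thesis using assms(4) by simp
qed

section \<open>Decomposition of matrices\<close>

lemma decomp_eq:
  assumes k: "k \<ge> 2"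
    and A: "A \<in> carrier_mat (dim_row M) (dim_col M)" and B: "B \<in> carrier_mat (dim_row M) (dim_col M)"
    and eA: "entries_in A (Rring (3*2^(k-1)))" and eB: "entries_in B (Rring (3*2^(k-1)))"
    and M: "M = A + zeta (3*2^k) \<cdot>\<^sub>m B"
  shows "decomp k M = (A, B)"
  unfolding decomp_def
proof (rule the_equality, goal_cases)
  case 1 show ?case using A B eA eB M by (simp only: prod.case)
next
  case (2 X)
  obtain A' B' where X: "X = (A', B')" by (cases X)
  have h0: "A' \<in> carrier_mat (dim_row M) (dim_col M) \<and> B' \<in> carrier_mat (dim_row M) (dim_col M) \<and>
    entries_in A' (Rring (3*2^(k-1))) \<and> entries_in B' (Rring (3*2^(k-1))) \<and> M = A' + zeta (3*2^k) \<cdot>\<^sub>m B'"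
    using 2 unfolding X case_prod_conv .
  hence h: "A' \<in> carrier_mat (dim_row M) (dim_col M)" "B' \<in> carrier_mat (dim_row M) (dim_col M)"
    "entries_in A' (Rring (3*2^(k-1)))" "entries_in B' (Rring (3*2^(k-1)))" "M = A' + zeta (3*2^k) \<cdot>\<^sub>m B'"
    by blast+
  have ent: "A' $$ (i,j) = A $$ (i,j) \<and> B' $$ (i,j) = B $$ (i,j)"
    if ij: "i < dim_row M" "j < dim_col M" for i j
  proof -
    have "M $$ (i,j) = (A' + zeta (3*2^k) \<cdot>\<^sub>m B') $$ (i,j)" using h(5) by simp
    also have "\<dots> = A' $$ (i,j) + zeta (3*2^k) * B' $$ (i,j)" using h(2) ij by simp
    finally have e1: "M $$ (i,j) = A' $$ (i,j) + zeta (3*2^k) * B' $$ (i,j)" .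
    have "M $$ (i,j) = (A + zeta (3*2^k) \<cdot>\<^sub>m B) $$ (i,j)" using M by simp
    also have "\<dots> = A $$ (i,j) + zeta (3*2^k) * B $$ (i,j)" using B ij by simp
    finally have e2: "M $$ (i,j) = A $$ (i,j) + zeta (3*2^k) * B $$ (i,j)" .
    have "(A' $$ (i,j) - A $$ (i,j)) + zeta (3*2^k) * (B' $$ (i,j) - B $$ (i,j)) = 0"
      using e1 e2 by (simp add: algebra_simps)
    moreover have "A' $$ (i,j) - A $$ (i,j) \<in> Rring (3*2^(k-1))"
      using h(1,3) eA A ij by (intro Rring_diff) (auto simp: entries_in_def)
    moreover have "B' $$ (i,j) - B $$ (i,j) \<in> Rring (3*2^(k-1))"
      using h(2,4) eB B ij by (intro Rring_diff) (auto simp: entries_in_def)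
    ultimately have "A' $$ (i,j) - A $$ (i,j) = 0 \<and> B' $$ (i,j) - B $$ (i,j) = 0"
      using uniq[OF k] by blast
    thus ?thesis by simp
  qed
  have "A' = A" by (rule eq_matI) (use ent A h(1) in auto)
  moreover have "B' = B" by (rule eq_matI) (use ent B h(2) in auto)
  ultimately show ?case using X by simp
qed

lemma decomp_exists:
  assumes k: "k \<ge> 2" and e: "entries_in M (Rring (3*2^k))"
  obtains A B where "A \<in> carrier_mat (dim_row M) (dim_col M)" "B \<in> carrier_mat (dim_row M) (dim_col M)"
    "entries_in A (Rring (3*2^(k-1)))" "entries_in B (Rring (3*2^(k-1)))" "M = A + zeta (3*2^k) \<cdot>\<^sub>m B"
proof -
  let ?m = "(3::nat)*2^(k-1)"
  have n: "(3::nat)*2^k = 2*?m" using k by (cases k) auto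
  define f where "f x = (SOME p. fst p \<in> Rring ?m \<and> snd p \<in> Rring ?m \<and> x = fst p + zeta (3*2^k) * snd p)" for x
  have f: "fst (f x) \<in> Rring ?m \<and> snd (f x) \<in> Rring ?m \<and> x = fst (f x) + zeta (3*2^k) * snd (f x)"
    if x: "x \<in> Rring (3*2^k)" for x
  proof -
    have "x \<in> Rring (2*?m)" using x n by simp
    then obtain a b where ab: "a \<in> Rring ?m" "b \<in> Rring ?m" "x = a + zeta (2*?m) * b"
      using Rring_decomp[of ?m x] by auto
    hence "\<exists>p. fst p \<in> Rring ?m \<and> snd p \<in> Rring ?m \<and> x = fst p + zeta (3*2^k) * snd p"
      using n by (intro exI[of _ "(a,b)"]) simp
    thus ?thesis unfolding f_def by (rule someI_ex)
  qed
  define A where "A = mat (dim_row M) (dim_col M) (\<lambda>(i,j). fst (f (M $$ (i,j))))"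
  define B where "B = mat (dim_row M) (dim_col M) (\<lambda>(i,j). snd (f (M $$ (i,j))))"
  show ?thesis
  proof (rule that)
    show "A \<in> carrier_mat (dim_row M) (dim_col M)" "B \<in> carrier_mat (dim_row M) (dim_col M)"
      unfolding A_def B_def by simp_all
    have fe: "fst (f (M $$ (i,j))) \<in> Rring ?m \<and> snd (f (M $$ (i,j))) \<in> Rring ?m"
      if "i < dim_row M" "j < dim_col M" for i j
    proof -
      have "M $$ (i,j) \<in> Rring (3*2^k)" using e that by (simp add: entries_in_def)
      from f[OF this] show ?thesis by blast
    qed
    show "entries_in A (Rring ?m)" "entries_in B (Rring ?m)"
      unfolding entries_in_def A_def B_def using fe by simp_all
    show "M = A + zeta (3*2^k) \<cdot>\<^sub>m B"
    proof (rule eq_matI)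
      fix i j assume ij: "i < dim_row (A + zeta (3*2^k) \<cdot>\<^sub>m B)" "j < dim_col (A + zeta (3*2^k) \<cdot>\<^sub>m B)"
      hence ij': "i < dim_row M" "j < dim_col M" unfolding B_def by simp_all
      hence "M $$ (i,j) \<in> Rring (3*2^k)" using e by (simp add: entries_in_def)
      hence eqx: "M $$ (i,j) = fst (f (M $$ (i,j))) + zeta (3*2^k) * snd (f (M $$ (i,j)))"
        using f by blast
      have r: "(A + zeta (3*2^k) \<cdot>\<^sub>m B) $$ (i,j) = fst (f (M $$ (i,j))) + zeta (3*2^k) * snd (f (M $$ (i,j)))"
        unfolding A_def B_def using ij' by simp
      show "M $$ (i,j) = (A + zeta (3*2^k) \<cdot>\<^sub>m B) $$ (i,j)"
        by (simp only: r) (rule eqx)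
    qed (simp_all add: B_def)
  qed
qed

lemma Gamma_mat: "Gamma k = mat 2 2 (\<lambda>(i,j). [[0, 1], [zeta (3 * 2^(k-1)), 0]] ! i ! j)"
  unfolding Gamma_def mat_of_rows_list_def by (simp add: numeral_2_eq_2)
lemma Gamma_carrier: "Gamma k \<in> carrier_mat 2 2"
  unfolding Gamma_mat by (rule mat_carrier)
lemma Gamma_idx: "Gamma k $$ (0,0) = 0" "Gamma k $$ (0,1) = 1"
  "Gamma k $$ (1,0) = zeta (3*2^(k-1))" "Gamma k $$ (1,1) = 0"
  unfolding Gamma_mat by simp_all

lemma Gamma_idx_Suc: "Gamma k $$ (0,Suc 0) = 1"
  "Gamma k $$ (Suc 0,0) = zeta (3*2^(k-1))" "Gamma k $$ (Suc 0,Suc 0) = 0"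
  using Gamma_idx by simp_all

lemma kron_carrier: "A \<in> carrier_mat a b \<Longrightarrow> B \<in> carrier_mat c d \<Longrightarrow> kron A B \<in> carrier_mat (a*c) (b*d)"
  unfolding kron_def by (rule carrier_matI) (auto dest: carrier_matD)

lemma kron_idx: "i < dim_row A * dim_row B \<Longrightarrow> j < dim_col A * dim_col B \<Longrightarrow>
  kron A B $$ (i,j) = A $$ (i div dim_row B, j div dim_col B) * B $$ (i mod dim_row B, j mod dim_col B)"
  by (simp add: kron_def)

lemma psi_eq: "decomp k M = (A,B) \<Longrightarrow> psi k M = kron A (1\<^sub>m 2) + kron B (Gamma k)"
  unfolding psi_def by simp

lemma psi_carrier:
  assumes "decomp k M = (A,B)" "A \<in> carrier_mat r c" "B \<in> carrier_mat r c"
  shows "psi k M \<in> carrier_mat (r*2) (c*2)"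
proof -
  have "kron A (1\<^sub>m 2) \<in> carrier_mat (r*2) (c*2)" using assms(2) by (rule kron_carrier) simp
  moreover have kB: "kron B (Gamma k) \<in> carrier_mat (r*2) (c*2)" using assms(3) Gamma_carrier by (rule kron_carrier)
  have "dim_row (kron B (Gamma k)) = r*2" "dim_col (kron B (Gamma k)) = c*2"
    using carrier_matD[OF kB] by simp_all
  thus ?thesis unfolding psi_eq[OF assms(1)] by (intro carrier_matI) simp_all
qed

lemma psi_idx:
  assumes "decomp k M = (A,B)" "A \<in> carrier_mat r c" "B \<in> carrier_mat r c" "i < r*2" "j < c*2"
  shows "psi k M $$ (i,j) = A $$ (i div 2, j div 2) * (if i mod 2 = j mod 2 then 1 else 0)
     + B $$ (i div 2, j div 2) * Gamma k $$ (i mod 2, j mod 2)"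
proof -
  have G: "dim_row (Gamma k) = 2" "dim_col (Gamma k) = 2" using Gamma_carrier by auto
  have "psi k M $$ (i,j) = kron A (1\<^sub>m 2) $$ (i,j) + kron B (Gamma k) $$ (i,j)"
    unfolding psi_eq[OF assms(1)] using assms G by (simp add: kron_def)
  also have "\<dots> = A $$ (i div 2, j div 2) * (if i mod 2 = j mod 2 then 1 else 0)
     + B $$ (i div 2, j div 2) * Gamma k $$ (i mod 2, j mod 2)"
    using assms G by (simp add: kron_idx)
  finally show ?thesis .
qed

lemma psi_blocks:
  assumes "decomp k M = (A,B)" "A \<in> carrier_mat d d" "B \<in> carrier_mat d d" "r < d" "p < d"
  shows "psi k M $$ (2*r, 2*p) = A $$ (r,p)" "psi k M $$ (2*r, 2*p+1) = B $$ (r,p)"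
    "psi k M $$ (2*r+1, 2*p) = zeta (3*2^(k-1)) * B $$ (r,p)" "psi k M $$ (2*r+1, 2*p+1) = A $$ (r,p)"
proof -
  have b: "2*r < d*2" "2*r+1 < d*2" "2*p < d*2" "2*p+1 < d*2" using assms(4,5) by simp_all
  have dm: "(2*r+1) div 2 = r" "(2*r+1) mod 2 = 1" "(2*p+1) div 2 = p" "(2*p+1) mod 2 = 1" by simp_all
  show "psi k M $$ (2*r, 2*p) = A $$ (r,p)" using psi_idx[OF assms(1-3) b(1) b(3)] by (simp add: Gamma_idx Gamma_idx_Suc)
  show "psi k M $$ (2*r, 2*p+1) = B $$ (r,p)" using psi_idx[OF assms(1-3) b(1) b(4)] dm by (simp add: Gamma_idx Gamma_idx_Suc)
  show "psi k M $$ (2*r+1, 2*p) = zeta (3*2^(k-1)) * B $$ (r,p)" using psi_idx[OF assms(1-3) b(2) b(3)] dm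
    by (simp add: Gamma_idx Gamma_idx_Suc)
  show "psi k M $$ (2*r+1, 2*p+1) = A $$ (r,p)" using psi_idx[OF assms(1-3) b(2) b(4)] dm by (simp add: Gamma_idx Gamma_idx_Suc)
qed

lemma sum_pairs: "(\<Sum>l<(d::nat)*2. f l) = (\<Sum>r<d. f (2*r) + f (2*r+1))"
proof (induction d)
  case 0 show ?case by simp
next
  case (Suc d)
  have "Suc d * 2 = Suc (Suc (d*2))" by simp
  thus ?case using Suc by (simp add: sum.distrib ac_simps)
qed

lemma mult_idx:
  assumes "A \<in> carrier_mat a b" "B \<in> carrier_mat b c" "i < a" "j < c"
  shows "(A * B) $$ (i,j) = (\<Sum>l<b. A $$ (i,l) * B $$ (l,j))"
proof -
  have "(A * B) $$ (i,j) = row A i \<bullet> col B j" using assms by simp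
  also have "\<dots> = (\<Sum>l\<in>{0..<b}. row A i $ l * col B j $ l)" unfolding scalar_prod_def using assms by simp
  also have "\<dots> = (\<Sum>l<b. A $$ (i,l) * B $$ (l,j))" using assms
    by (auto simp: atLeast0LessThan intro!: sum.cong)
  finally show ?thesis .
qed

lemma mult_vec_idx:
  assumes "A \<in> carrier_mat a b" "dim_vec v = b" "i < a"
  shows "(A *\<^sub>v v) $ i = (\<Sum>l<b. A $$ (i,l) * v $ l)"
proof -
  have "(A *\<^sub>v v) $ i = row A i \<bullet> v" using assms by simp
  also have "\<dots> = (\<Sum>l\<in>{0..<b}. row A i $ l * v $ l)" unfolding scalar_prod_def using assms by simp
  also have "\<dots> = (\<Sum>l<b. A $$ (i,l) * v $ l)" using assms
    by (auto simp: atLeast0LessThan intro!: sum.cong)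
  finally show ?thesis .
qed

lemma adj_carrier: "A \<in> carrier_mat a b \<Longrightarrow> adj A \<in> carrier_mat b a"
  unfolding adj_def by (rule carrier_matI) (auto dest: carrier_matD)

lemma adj_idx: "A \<in> carrier_mat a b \<Longrightarrow> i < b \<Longrightarrow> j < a \<Longrightarrow> adj A $$ (i,j) = cnj (A $$ (j,i))"
  by (simp add: adj_def)

lemma kron_vec_idx: "l < dim_vec u * dim_vec v \<Longrightarrow> kron_vec u v $ l = u $ (l div dim_vec v) * v $ (l mod dim_vec v)"
  by (simp add: kron_vec_def)

lemma idx_cases: "(i::nat) < d*2 \<Longrightarrow> \<exists>p<d. i = 2*p \<or> i = 2*p+1"
  by (intro exI[of _ "i div 2"]) auto

lemma zeta_facts:
  assumes "k \<ge> 2"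
  shows "zeta (3*2^k) * zeta (3*2^k) = zeta (3*2^(k-1))"
    "cnj (zeta (3*2^k)) * zeta (3*2^k) = 1"
    "cnj (zeta (3*2^(k-1))) * zeta (3*2^(k-1)) = 1"
    "zeta (3*2^(k-1)) * cnj (zeta (3*2^(k-1))) = 1"
    "cnj (zeta (3*2^k)) = zeta (3*2^k) * cnj (zeta (3*2^(k-1)))"
proof -
  have n: "(3::nat)*2^k = 2*(3*2^(k-1))" using assms by (cases k) auto
  have "zeta (2*(3*2^(k-1))) ^ 2 = zeta (3*2^(k-1))" by (rule zeta_sq) simp
  thus 1: "zeta (3*2^k) * zeta (3*2^k) = zeta (3*2^(k-1))" unfolding n by (simp add: power2_eq_square)
  show 2: "cnj (zeta (3*2^k)) * zeta (3*2^k) = 1" by (rule cnj_zeta)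
  show "cnj (zeta (3*2^(k-1))) * zeta (3*2^(k-1)) = 1" by (rule cnj_zeta)
  thus "zeta (3*2^(k-1)) * cnj (zeta (3*2^(k-1))) = 1" by (simp add: mult.commute)
  have "zeta (3*2^k) * cnj (zeta (3*2^(k-1))) = zeta (3*2^k) * (cnj (zeta (3*2^k)) * cnj (zeta (3*2^k)))"
    unfolding 1[symmetric] by simp
  also have "\<dots> = (cnj (zeta (3*2^k)) * zeta (3*2^k)) * cnj (zeta (3*2^k))" by (simp only: ac_simps)
  also have "\<dots> = cnj (zeta (3*2^k))" using 2 by simp
  finally show "cnj (zeta (3*2^k)) = zeta (3*2^k) * cnj (zeta (3*2^(k-1)))" by simp
qed

lemma pw1:
  fixes w g a b a' b' :: complex
  assumes "cnj w * w = 1" "cnj w = w * cnj g"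
  shows "cnj (a + w*b) * (a' + w*b') = (cnj a * a' + cnj b * b') + w * (cnj a * b' + cnj g * (cnj b * a'))"
proof -
  have "cnj (a + w*b) * (a' + w*b') = cnj a * a' + (cnj w * w) * (cnj b * b') + w * (cnj a * b') + cnj w * (cnj b * a')"
    by (simp add: algebra_simps)
  also have "\<dots> = cnj a * a' + 1 * (cnj b * b') + w * (cnj a * b') + cnj w * (cnj b * a')"
    by (simp only: assms(1))
  also have "\<dots> = cnj a * a' + 1 * (cnj b * b') + w * (cnj a * b') + (w * cnj g) * (cnj b * a')"
    by (simp only: assms(2))
  also have "\<dots> = (cnj a * a' + cnj b * b') + w * (cnj a * b' + cnj g * (cnj b * a'))"
    by (simp add: algebra_simps)
  finally show ?thesis .
qed

lemma pw2:
  fixes w g a b a' b' :: complex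
  assumes "cnj w * w = 1" "cnj w = w * cnj g"
  shows "(a + w*b) * cnj (a' + w*b') = (a * cnj a' + b * cnj b') + w * (b * cnj a' + cnj g * (a * cnj b'))"
proof -
  have "(a + w*b) * cnj (a' + w*b') = a * cnj a' + (cnj w * w) * (b * cnj b') + w * (b * cnj a') + cnj w * (a * cnj b')"
    by (simp add: algebra_simps)
  also have "\<dots> = a * cnj a' + 1 * (b * cnj b') + w * (b * cnj a') + cnj w * (a * cnj b')"
    by (simp only: assms(1))
  also have "\<dots> = a * cnj a' + 1 * (b * cnj b') + w * (b * cnj a') + (w * cnj g) * (a * cnj b')"
    by (simp only: assms(2))
  also have "\<dots> = (a * cnj a' + b * cnj b') + w * (b * cnj a' + cnj g * (a * cnj b'))"
    by (simp add: algebra_simps)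
  finally show ?thesis .
qed

lemma entry_in: "entries_in A R \<Longrightarrow> A \<in> carrier_mat d d \<Longrightarrow> r < d \<Longrightarrow> s < d \<Longrightarrow> A $$ (r,s) \<in> R"
  unfolding entries_in_def by (auto dest: carrier_matD)

lemma U_carrier: "A \<in> carrier_mat d d \<Longrightarrow> B \<in> carrier_mat d d \<Longrightarrow> A + w \<cdot>\<^sub>m B \<in> carrier_mat d d"
proof -
  assume "B \<in> carrier_mat d d"
  hence "dim_row B = d" "dim_col B = d" by (auto dest: carrier_matD)
  thus ?thesis by (intro carrier_matI) simp_all
qed

lemma U_idx: "B \<in> carrier_mat d d \<Longrightarrow> r < d \<Longrightarrow> s < d \<Longrightarrow> (A + w \<cdot>\<^sub>m B) $$ (r,s) = A $$ (r,s) + w * B $$ (r,s)"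
proof -
  assume "B \<in> carrier_mat d d" "r < d" "s < d"
  moreover hence "dim_row B = d" "dim_col B = d" by (auto dest: carrier_matD)
  ultimately show ?thesis by simp
qed

lemma XY:
  assumes k: "k \<ge> 2" and A: "A \<in> carrier_mat d d" and B: "B \<in> carrier_mat d d"
    and eA: "entries_in A (Rring (3*2^(k-1)))" and eB: "entries_in B (Rring (3*2^(k-1)))"
    and uu: "adj (A + zeta (3*2^k) \<cdot>\<^sub>m B) * (A + zeta (3*2^k) \<cdot>\<^sub>m B) = 1\<^sub>m d"
    and p: "p < d" and q: "q < d"
  shows "(\<Sum>r<d. cnj (A$$(r,p)) * A$$(r,q) + cnj (B$$(r,p)) * B$$(r,q)) = (if p = q then 1 else 0)"
    "(\<Sum>r<d. cnj (A$$(r,p)) * B$$(r,q) + cnj (zeta (3*2^(k-1))) * (cnj (B$$(r,p)) * A$$(r,q))) = 0"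
proof -
  let ?w = "zeta (3*2^k)" let ?g = "zeta (3*2^(k-1))" let ?R = "Rring (3*2^(k-1))"
  let ?U = "A + ?w \<cdot>\<^sub>m B"
  note zf = zeta_facts[OF k]
  define X where "X = (\<Sum>r<d. cnj (A$$(r,p)) * A$$(r,q) + cnj (B$$(r,p)) * B$$(r,q))"
  define Y where "Y = (\<Sum>r<d. cnj (A$$(r,p)) * B$$(r,q) + cnj ?g * (cnj (B$$(r,p)) * A$$(r,q)))"
  have Uc: "?U \<in> carrier_mat d d" using A B by (rule U_carrier)
  have "(adj ?U * ?U) $$ (p,q) = (\<Sum>r<d. adj ?U $$ (p,r) * ?U $$ (r,q))"
    by (rule mult_idx[OF adj_carrier[OF Uc] Uc p q])
  also have "\<dots> = (\<Sum>r<d. cnj (A$$(r,p)) * A$$(r,q) + cnj (B$$(r,p)) * B$$(r,q)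
       + ?w * (cnj (A$$(r,p)) * B$$(r,q) + cnj ?g * (cnj (B$$(r,p)) * A$$(r,q))))"
  proof (rule sum.cong)
    fix r assume "r \<in> {..<d}"
    hence r: "r < d" by simp
    have "adj ?U $$ (p,r) * ?U $$ (r,q) = cnj (?U $$ (r,p)) * ?U $$ (r,q)"
      using adj_idx[OF Uc p r] by simp
    also have "\<dots> = cnj (A$$(r,p) + ?w * B$$(r,p)) * (A$$(r,q) + ?w * B$$(r,q))"
      using U_idx[OF B r p] U_idx[OF B r q] by simp
    also have "\<dots> = cnj (A$$(r,p)) * A$$(r,q) + cnj (B$$(r,p)) * B$$(r,q)
       + ?w * (cnj (A$$(r,p)) * B$$(r,q) + cnj ?g * (cnj (B$$(r,p)) * A$$(r,q)))"
      by (rule pw1[OF zf(2) zf(5)])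
    finally show "adj ?U $$ (p,r) * ?U $$ (r,q) = \<dots>" .
  qed simp
  also have "\<dots> = X + ?w * Y" unfolding X_def Y_def sum_distrib_left by (rule sum.distrib)
  finally have h: "X + ?w * Y = (if p = q then 1 else 0)" using uu p q by simp
  have eq: "(X - (if p = q then 1 else 0)) + ?w * Y = 0"
    unfolding diff_add_eq h by simp
  have mA: "A $$ (r,s) \<in> ?R" "cnj (A $$ (r,s)) \<in> ?R" if "r < d" "s < d" for r s
    using entry_in[OF eA A that] Rring_cnj[of "3*2^(k-1)"] by auto
  have mB: "B $$ (r,s) \<in> ?R" "cnj (B $$ (r,s)) \<in> ?R" if "r < d" "s < d" for r s
    using entry_in[OF eB B that] Rring_cnj[of "3*2^(k-1)"] by auto
  have mg: "cnj ?g \<in> ?R" using Rring_cnj[of "3*2^(k-1)" ?g] Rring_zeta by simp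
  have "X \<in> ?R" unfolding X_def
    apply (rule Rring_sum, simp)
    apply (simp only: lessThan_iff)
    apply (intro Rring_add Rring_mult mA mB p q; assumption)
    done
  moreover have "(if p = q then 1 else 0) \<in> ?R" using Rring_0 Rring_1 by simp
  ultimately have m1: "X - (if p = q then 1 else 0) \<in> ?R" by (rule Rring_diff)
  have m2: "Y \<in> ?R" unfolding Y_def
    apply (rule Rring_sum, simp)
    apply (simp only: lessThan_iff)
    apply (intro Rring_add Rring_mult mA mB mg p q; assumption)
    done
  from uniq[OF k m1 m2 eq] have "X = (if p = q then 1 else 0)" "Y = 0" by simp_all
  thus "(\<Sum>r<d. cnj (A$$(r,p)) * A$$(r,q) + cnj (B$$(r,p)) * B$$(r,q)) = (if p = q then 1 else 0)"
    "(\<Sum>r<d. cnj (A$$(r,p)) * B$$(r,q) + cnj (zeta (3*2^(k-1))) * (cnj (B$$(r,p)) * A$$(r,q))) = 0"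
    unfolding X_def Y_def by simp_all
qed

lemma XY2:
  assumes k: "k \<ge> 2" and A: "A \<in> carrier_mat d d" and B: "B \<in> carrier_mat d d"
    and eA: "entries_in A (Rring (3*2^(k-1)))" and eB: "entries_in B (Rring (3*2^(k-1)))"
    and uu: "(A + zeta (3*2^k) \<cdot>\<^sub>m B) * adj (A + zeta (3*2^k) \<cdot>\<^sub>m B) = 1\<^sub>m d"
    and p: "p < d" and q: "q < d"
  shows "(\<Sum>r<d. A$$(p,r) * cnj (A$$(q,r)) + B$$(p,r) * cnj (B$$(q,r))) = (if p = q then 1 else 0)"
    "(\<Sum>r<d. B$$(p,r) * cnj (A$$(q,r)) + cnj (zeta (3*2^(k-1))) * (A$$(p,r) * cnj (B$$(q,r)))) = 0"
proof -
  let ?w = "zeta (3*2^k)" let ?g = "zeta (3*2^(k-1))" let ?R = "Rring (3*2^(k-1))"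
  let ?U = "A + ?w \<cdot>\<^sub>m B"
  note zf = zeta_facts[OF k]
  define X where "X = (\<Sum>r<d. A$$(p,r) * cnj (A$$(q,r)) + B$$(p,r) * cnj (B$$(q,r)))"
  define Y where "Y = (\<Sum>r<d. B$$(p,r) * cnj (A$$(q,r)) + cnj ?g * (A$$(p,r) * cnj (B$$(q,r))))"
  have Uc: "?U \<in> carrier_mat d d" using A B by (rule U_carrier)
  have "(?U * adj ?U) $$ (p,q) = (\<Sum>r<d. ?U $$ (p,r) * adj ?U $$ (r,q))"
    by (rule mult_idx[OF Uc adj_carrier[OF Uc] p q])
  also have "\<dots> = (\<Sum>r<d. A$$(p,r) * cnj (A$$(q,r)) + B$$(p,r) * cnj (B$$(q,r))
       + ?w * (B$$(p,r) * cnj (A$$(q,r)) + cnj ?g * (A$$(p,r) * cnj (B$$(q,r)))))"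
  proof (rule sum.cong)
    fix r assume "r \<in> {..<d}"
    hence r: "r < d" by simp
    have "?U $$ (p,r) * adj ?U $$ (r,q) = ?U $$ (p,r) * cnj (?U $$ (q,r))"
      using adj_idx[OF Uc r q] by simp
    also have "\<dots> = (A$$(p,r) + ?w * B$$(p,r)) * cnj (A$$(q,r) + ?w * B$$(q,r))"
      using U_idx[OF B p r] U_idx[OF B q r] by simp
    also have "\<dots> = A$$(p,r) * cnj (A$$(q,r)) + B$$(p,r) * cnj (B$$(q,r))
       + ?w * (B$$(p,r) * cnj (A$$(q,r)) + cnj ?g * (A$$(p,r) * cnj (B$$(q,r))))"
      by (rule pw2[OF zf(2) zf(5)])
    finally show "?U $$ (p,r) * adj ?U $$ (r,q) = \<dots>" .
  qed simp
  also have "\<dots> = X + ?w * Y" unfolding X_def Y_def sum_distrib_left by (rule sum.distrib)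
  finally have h: "X + ?w * Y = (if p = q then 1 else 0)" using uu p q by simp
  have eq: "(X - (if p = q then 1 else 0)) + ?w * Y = 0"
    unfolding diff_add_eq h by simp
  have mA: "A $$ (r,s) \<in> ?R" "cnj (A $$ (r,s)) \<in> ?R" if "r < d" "s < d" for r s
    using entry_in[OF eA A that] Rring_cnj[of "3*2^(k-1)"] by auto
  have mB: "B $$ (r,s) \<in> ?R" "cnj (B $$ (r,s)) \<in> ?R" if "r < d" "s < d" for r s
    using entry_in[OF eB B that] Rring_cnj[of "3*2^(k-1)"] by auto
  have mg: "cnj ?g \<in> ?R" using Rring_cnj[of "3*2^(k-1)" ?g] Rring_zeta by simp
  have "X \<in> ?R" unfolding X_def
    apply (rule Rring_sum, simp)
    apply (simp only: lessThan_iff)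
    apply (intro Rring_add Rring_mult mA mB p q; assumption)
    done
  moreover have "(if p = q then 1 else 0) \<in> ?R" using Rring_0 Rring_1 by simp
  ultimately have m1: "X - (if p = q then 1 else 0) \<in> ?R" by (rule Rring_diff)
  have m2: "Y \<in> ?R" unfolding Y_def
    apply (rule Rring_sum, simp)
    apply (simp only: lessThan_iff)
    apply (intro Rring_add Rring_mult mA mB mg p q; assumption)
    done
  from uniq[OF k m1 m2 eq] have "X = (if p = q then 1 else 0)" "Y = 0" by simp_all
  thus "(\<Sum>r<d. A$$(p,r) * cnj (A$$(q,r)) + B$$(p,r) * cnj (B$$(q,r))) = (if p = q then 1 else 0)"
    "(\<Sum>r<d. B$$(p,r) * cnj (A$$(q,r)) + cnj (zeta (3*2^(k-1))) * (A$$(p,r) * cnj (B$$(q,r)))) = 0"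
    unfolding X_def Y_def by simp_all
qed

lemma c00: "cnj g * g = 1 \<Longrightarrow> cnj a * a' + cnj (g*b) * (g*b') = cnj a * a' + cnj b * b'"
proof -
  assume h: "cnj g * g = 1"
  have "cnj (g*b) * (g*b') = (cnj g * g) * (cnj b * b')" by (simp add: ac_simps)
  thus ?thesis using h by simp
qed

lemma c01: "cnj a * b' + cnj (g*b) * a' = cnj a * b' + cnj g * (cnj b * a')"
  by (simp add: mult.assoc)

lemma c10: "g * cnj g = 1 \<Longrightarrow> cnj b * a' + cnj a * (g * b') = g * (cnj a * b' + cnj g * (cnj b * a'))"
proof -
  assume h: "g * cnj g = 1"
  have "g * (cnj a * b' + cnj g * (cnj b * a')) = cnj a * (g * b') + (g * cnj g) * (cnj b * a')"
    by (simp add: algebra_simps)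
  thus ?thesis using h by (simp add: add.commute)
qed

lemma c11: "cnj b * b' + cnj a * a' = cnj a * a' + cnj b * (b'::complex)"
  by (simp add: add.commute)

lemma d01: "a * cnj (g*b') + b * cnj a' = b * cnj a' + cnj g * (a * cnj (b'::complex))"
  by (simp add: ac_simps)

lemma d10: "g * cnj g = 1 \<Longrightarrow> (g*b) * cnj a' + a * cnj b' = g * (b * cnj a' + cnj g * (a * cnj b'))"
proof -
  assume h: "g * cnj g = 1"
  have "g * (b * cnj a' + cnj g * (a * cnj b')) = (g*b) * cnj a' + (g * cnj g) * (a * cnj b')"
    by (simp add: algebra_simps)
  thus ?thesis using h by simp
qed

lemma d11: "g * cnj g = 1 \<Longrightarrow> (g*b) * cnj (g*b') + a * cnj a' = a * cnj a' + b * cnj b'"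
proof -
  assume h: "g * cnj g = 1"
  have "(g*b) * cnj (g*b') = (g * cnj g) * (b * cnj b')" by (simp add: ac_simps)
  thus ?thesis using h by (simp add: add.commute)
qed

lemma cnj_zeta': "zeta m * cnj (zeta m) = 1"
  using cnj_zeta[of m] by (simp add: mult.commute)

lemma odd_neq: "2*(p::nat) \<noteq> 2*q+1" "2*(p::nat) + 1 \<noteq> 2*q" by presburger+

lemma psi_unitary:
  assumes k: "k \<ge> 2" and A: "A \<in> carrier_mat d d" and B: "B \<in> carrier_mat d d"
    and eA: "entries_in A (Rring (3*2^(k-1)))" and eB: "entries_in B (Rring (3*2^(k-1)))"
    and dec: "decomp k U = (A,B)" and U: "U = A + zeta (3*2^k) \<cdot>\<^sub>m B"
    and uu1: "adj U * U = 1\<^sub>m d" and uu2: "U * adj U = 1\<^sub>m d"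
  shows "adj (psi k U) * psi k U = 1\<^sub>m (d*2)" "psi k U * adj (psi k U) = 1\<^sub>m (d*2)"
proof -
  let ?P = "psi k U" let ?g = "zeta (3*2^(k-1))"
  have Pc: "?P \<in> carrier_mat (d*2) (d*2)" by (rule psi_carrier[OF dec A B])
  note bl0 = psi_blocks[OF dec A B]
  have blS: "?P $$ (Suc (2*r), 2*p) = ?g * B$$(r,p)" "?P $$ (Suc (2*r), Suc (2*p)) = A$$(r,p)"
    "?P $$ (2*r, Suc (2*p)) = B$$(r,p)" if "r < d" "p < d" for r p
    using bl0[OF that] by simp_all
  note bl = bl0 blS
  note zf = zeta_facts[OF k]
  have uu1': "adj (A + zeta (3*2^k) \<cdot>\<^sub>m B) * (A + zeta (3*2^k) \<cdot>\<^sub>m B) = 1\<^sub>m d" using uu1 U by simp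
  have uu2': "(A + zeta (3*2^k) \<cdot>\<^sub>m B) * adj (A + zeta (3*2^k) \<cdot>\<^sub>m B) = 1\<^sub>m d" using uu2 U by simp
  have S1: "(adj ?P * ?P) $$ (i,j) = (\<Sum>r<d. cnj (?P $$ (2*r,i)) * ?P $$ (2*r,j) + cnj (?P $$ (2*r+1,i)) * ?P $$ (2*r+1,j))"
    if ij: "i < d*2" "j < d*2" for i j
  proof -
    have "(adj ?P * ?P) $$ (i,j) = (\<Sum>l<d*2. adj ?P $$ (i,l) * ?P $$ (l,j))"
      by (rule mult_idx[OF adj_carrier[OF Pc] Pc ij])
    also have "\<dots> = (\<Sum>l<d*2. cnj (?P $$ (l,i)) * ?P $$ (l,j))"
      by (rule sum.cong) (simp_all add: adj_idx[OF Pc] ij)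
    also have "\<dots> = (\<Sum>r<d. cnj (?P $$ (2*r,i)) * ?P $$ (2*r,j) + cnj (?P $$ (2*r+1,i)) * ?P $$ (2*r+1,j))"
      by (rule sum_pairs)
    finally show ?thesis .
  qed
  have E1: "(adj ?P * ?P) $$ (2*p,2*q) = 1\<^sub>m (d*2) $$ (2*p,2*q) \<and>
            (adj ?P * ?P) $$ (2*p,2*q+1) = 1\<^sub>m (d*2) $$ (2*p,2*q+1) \<and>
            (adj ?P * ?P) $$ (2*p+1,2*q) = 1\<^sub>m (d*2) $$ (2*p+1,2*q) \<and>
            (adj ?P * ?P) $$ (2*p+1,2*q+1) = 1\<^sub>m (d*2) $$ (2*p+1,2*q+1)"
    if p: "p < d" and q: "q < d" for p q
  proof -
    note X = XY(1)[OF k A B eA eB uu1' p q] and Y = XY(2)[OF k A B eA eB uu1' p q]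
    have b: "2*p < d*2" "2*p+1 < d*2" "2*q < d*2" "2*q+1 < d*2" using p q by simp_all
    have "(adj ?P * ?P) $$ (2*p,2*q) = (\<Sum>r<d. cnj (A$$(r,p)) * A$$(r,q) + cnj (B$$(r,p)) * B$$(r,q))"
      unfolding S1[OF b(1) b(3)]
      by (rule sum.cong) (simp_all add: bl p q c00 cnj_zeta)
    also have "\<dots> = 1\<^sub>m (d*2) $$ (2*p,2*q)" using X b by simp
    finally have e1: "(adj ?P * ?P) $$ (2*p,2*q) = 1\<^sub>m (d*2) $$ (2*p,2*q)" .
    have "(adj ?P * ?P) $$ (2*p,2*q+1) = (\<Sum>r<d. cnj (A$$(r,p)) * B$$(r,q) + cnj ?g * (cnj (B$$(r,p)) * A$$(r,q)))"
      unfolding S1[OF b(1) b(4)]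
      by (rule sum.cong) (simp_all add: bl p q c01)
    also have "\<dots> = 1\<^sub>m (d*2) $$ (2*p,2*q+1)" using Y b odd_neq by simp
    finally have e2: "(adj ?P * ?P) $$ (2*p,2*q+1) = 1\<^sub>m (d*2) $$ (2*p,2*q+1)" .
    have "(adj ?P * ?P) $$ (2*p+1,2*q) = (\<Sum>r<d. ?g * (cnj (A$$(r,p)) * B$$(r,q) + cnj ?g * (cnj (B$$(r,p)) * A$$(r,q))))"
      unfolding S1[OF b(2) b(3)]
      by (rule sum.cong) (simp_all add: bl p q c10 cnj_zeta')
    also have "\<dots> = ?g * (\<Sum>r<d. cnj (A$$(r,p)) * B$$(r,q) + cnj ?g * (cnj (B$$(r,p)) * A$$(r,q)))"
      by (rule sum_distrib_left[symmetric])
    also have "\<dots> = 1\<^sub>m (d*2) $$ (2*p+1,2*q)" using Y b odd_neq by simp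
    finally have e3: "(adj ?P * ?P) $$ (2*p+1,2*q) = 1\<^sub>m (d*2) $$ (2*p+1,2*q)" .
    have "(adj ?P * ?P) $$ (2*p+1,2*q+1) = (\<Sum>r<d. cnj (A$$(r,p)) * A$$(r,q) + cnj (B$$(r,p)) * B$$(r,q))"
      unfolding S1[OF b(2) b(4)]
      by (rule sum.cong) (simp_all add: bl p q c11)
    also have "\<dots> = 1\<^sub>m (d*2) $$ (2*p+1,2*q+1)" using X b by simp
    finally have e4: "(adj ?P * ?P) $$ (2*p+1,2*q+1) = 1\<^sub>m (d*2) $$ (2*p+1,2*q+1)" .
    show ?thesis using e1 e2 e3 e4 by blast
  qed
  show "adj ?P * ?P = 1\<^sub>m (d*2)"
  proof (rule eq_matI)
    fix i j assume "i < dim_row (1\<^sub>m (d*2))" "j < dim_col (1\<^sub>m (d*2))"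
    hence ij: "i < d*2" "j < d*2" by simp_all
    obtain p where p: "p < d" "i = 2*p \<or> i = 2*p+1" using idx_cases[OF ij(1)] by blast
    obtain q where q: "q < d" "j = 2*q \<or> j = 2*q+1" using idx_cases[OF ij(2)] by blast
    show "(adj ?P * ?P) $$ (i,j) = 1\<^sub>m (d*2) $$ (i,j)" using E1[OF p(1) q(1)] p(2) q(2) by blast
  next
    show "dim_row (adj ?P * ?P) = dim_row (1\<^sub>m (d*2))" using adj_carrier[OF Pc] by simp
    show "dim_col (adj ?P * ?P) = dim_col (1\<^sub>m (d*2))" using Pc by simp
  qed
  have S2: "(?P * adj ?P) $$ (i,j) = (\<Sum>r<d. ?P $$ (i,2*r) * cnj (?P $$ (j,2*r)) + ?P $$ (i,2*r+1) * cnj (?P $$ (j,2*r+1)))"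
    if ij: "i < d*2" "j < d*2" for i j
  proof -
    have "(?P * adj ?P) $$ (i,j) = (\<Sum>l<d*2. ?P $$ (i,l) * adj ?P $$ (l,j))"
      by (rule mult_idx[OF Pc adj_carrier[OF Pc] ij])
    also have "\<dots> = (\<Sum>l<d*2. ?P $$ (i,l) * cnj (?P $$ (j,l)))"
      by (rule sum.cong) (simp_all add: adj_idx[OF Pc] ij)
    also have "\<dots> = (\<Sum>r<d. ?P $$ (i,2*r) * cnj (?P $$ (j,2*r)) + ?P $$ (i,2*r+1) * cnj (?P $$ (j,2*r+1)))"
      by (rule sum_pairs)
    finally show ?thesis .
  qed
  have E2: "(?P * adj ?P) $$ (2*p,2*q) = 1\<^sub>m (d*2) $$ (2*p,2*q) \<and>
            (?P * adj ?P) $$ (2*p,2*q+1) = 1\<^sub>m (d*2) $$ (2*p,2*q+1) \<and>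
            (?P * adj ?P) $$ (2*p+1,2*q) = 1\<^sub>m (d*2) $$ (2*p+1,2*q) \<and>
            (?P * adj ?P) $$ (2*p+1,2*q+1) = 1\<^sub>m (d*2) $$ (2*p+1,2*q+1)"
    if p: "p < d" and q: "q < d" for p q
  proof -
    note X = XY2(1)[OF k A B eA eB uu2' p q] and Y = XY2(2)[OF k A B eA eB uu2' p q]
    have b: "2*p < d*2" "2*p+1 < d*2" "2*q < d*2" "2*q+1 < d*2" using p q by simp_all
    have "(?P * adj ?P) $$ (2*p,2*q) = (\<Sum>r<d. A$$(p,r) * cnj (A$$(q,r)) + B$$(p,r) * cnj (B$$(q,r)))"
      unfolding S2[OF b(1) b(3)]
      by (rule sum.cong) (simp_all add: bl p q)
    also have "\<dots> = 1\<^sub>m (d*2) $$ (2*p,2*q)" using X b by simp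
    finally have e1: "(?P * adj ?P) $$ (2*p,2*q) = 1\<^sub>m (d*2) $$ (2*p,2*q)" .
    have "(?P * adj ?P) $$ (2*p,2*q+1) = (\<Sum>r<d. B$$(p,r) * cnj (A$$(q,r)) + cnj ?g * (A$$(p,r) * cnj (B$$(q,r))))"
      unfolding S2[OF b(1) b(4)]
      by (rule sum.cong) (simp_all add: bl p q d01)
    also have "\<dots> = 1\<^sub>m (d*2) $$ (2*p,2*q+1)" using Y b odd_neq by simp
    finally have e2: "(?P * adj ?P) $$ (2*p,2*q+1) = 1\<^sub>m (d*2) $$ (2*p,2*q+1)" .
    have "(?P * adj ?P) $$ (2*p+1,2*q) = (\<Sum>r<d. ?g * (B$$(p,r) * cnj (A$$(q,r)) + cnj ?g * (A$$(p,r) * cnj (B$$(q,r)))))"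
      unfolding S2[OF b(2) b(3)]
      by (rule sum.cong) (simp_all add: bl p q d10 cnj_zeta')
    also have "\<dots> = ?g * (\<Sum>r<d. B$$(p,r) * cnj (A$$(q,r)) + cnj ?g * (A$$(p,r) * cnj (B$$(q,r))))"
      by (rule sum_distrib_left[symmetric])
    also have "\<dots> = 1\<^sub>m (d*2) $$ (2*p+1,2*q)" using Y b odd_neq by simp
    finally have e3: "(?P * adj ?P) $$ (2*p+1,2*q) = 1\<^sub>m (d*2) $$ (2*p+1,2*q)" .
    have "(?P * adj ?P) $$ (2*p+1,2*q+1) = (\<Sum>r<d. A$$(p,r) * cnj (A$$(q,r)) + B$$(p,r) * cnj (B$$(q,r)))"
      unfolding S2[OF b(2) b(4)]
      by (rule sum.cong) (simp_all add: bl p q d11 cnj_zeta')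
    also have "\<dots> = 1\<^sub>m (d*2) $$ (2*p+1,2*q+1)" using X b by simp
    finally have e4: "(?P * adj ?P) $$ (2*p+1,2*q+1) = 1\<^sub>m (d*2) $$ (2*p+1,2*q+1)" .
    show ?thesis using e1 e2 e3 e4 by blast
  qed
  show "?P * adj ?P = 1\<^sub>m (d*2)"
  proof (rule eq_matI)
    fix i j assume "i < dim_row (1\<^sub>m (d*2))" "j < dim_col (1\<^sub>m (d*2))"
    hence ij: "i < d*2" "j < d*2" by simp_all
    obtain p where p: "p < d" "i = 2*p \<or> i = 2*p+1" using idx_cases[OF ij(1)] by blast
    obtain q where q: "q < d" "j = 2*q \<or> j = 2*q+1" using idx_cases[OF ij(2)] by blast
    show "(?P * adj ?P) $$ (i,j) = 1\<^sub>m (d*2) $$ (i,j)" using E2[OF p(1) q(1)] p(2) q(2) by blast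
  next
    show "dim_row (?P * adj ?P) = dim_row (1\<^sub>m (d*2))" using Pc by simp
    show "dim_col (?P * adj ?P) = dim_col (1\<^sub>m (d*2))" using adj_carrier[OF Pc] by simp
  qed
qed

lemma dvec_facts: "dim_vec (dvec k) = 2" "dvec k $ 0 = 1 / complex_of_real (sqrt 2)"
  "dvec k $ 1 = zeta (3*2^k) / complex_of_real (sqrt 2)"
  by (simp_all add: dvec_def vec_of_list_index del: vec_of_list_Cons)

lemma psi_cat:
  assumes k: "k \<ge> 2" and A: "A \<in> carrier_mat d d" and B: "B \<in> carrier_mat d d"
    and dec: "decomp k U = (A,B)" and U: "U = A + zeta (3*2^k) \<cdot>\<^sub>m B" and u: "u \<in> carrier_vec d"
  shows "psi k U *\<^sub>v kron_vec u (dvec k) = kron_vec (U *\<^sub>v u) (dvec k)"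
proof -
  let ?P = "psi k U" let ?w = "zeta (3*2^k)" let ?g = "zeta (3*2^(k-1))" let ?v = "dvec k"
  note zf = zeta_facts[OF k]
  have dv1: "?v $ 1 = ?w * ?v $ 0" using dvec_facts by simp
  have du: "dim_vec u = d" using u by auto
  have Uc: "U \<in> carrier_mat d d" unfolding U using A B by (rule U_carrier)
  have Pc: "?P \<in> carrier_mat (d*2) (d*2)" by (rule psi_carrier[OF dec A B])
  note bl0 = psi_blocks[OF dec A B]
  have blS: "?P $$ (Suc (2*r), 2*p) = ?g * B$$(r,p)" "?P $$ (Suc (2*r), Suc (2*p)) = A$$(r,p)"
    "?P $$ (2*r, Suc (2*p)) = B$$(r,p)" if "r < d" "p < d" for r p
    using bl0[OF that] by simp_all
  note bl = bl0 blS
  have dkv: "dim_vec (kron_vec u ?v) = d*2" using du dvec_facts by (simp add: kron_vec_def)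
  have dkv2: "dim_vec (kron_vec (U *\<^sub>v u) ?v) = d*2" using Uc dvec_facts by (simp add: kron_vec_def)
  have L: "(?P *\<^sub>v kron_vec u ?v) $ i = (\<Sum>r<d. ?P $$ (i,2*r) * (u$r * ?v$0) + ?P $$ (i,2*r+1) * (u$r * ?v$1))"
    if i: "i < d*2" for i
  proof -
    have "(?P *\<^sub>v kron_vec u ?v) $ i = (\<Sum>l<d*2. ?P $$ (i,l) * kron_vec u ?v $ l)"
      by (rule mult_vec_idx[OF Pc dkv i])
    also have "\<dots> = (\<Sum>r<d. ?P $$ (i,2*r) * kron_vec u ?v $ (2*r) + ?P $$ (i,2*r+1) * kron_vec u ?v $ (2*r+1))"
      by (rule sum_pairs)
    also have "\<dots> = (\<Sum>r<d. ?P $$ (i,2*r) * (u$r * ?v$0) + ?P $$ (i,2*r+1) * (u$r * ?v$1))"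
    proof (rule sum.cong)
      fix r assume "r \<in> {..<d}" hence r: "r < d" by simp
      have "kron_vec u ?v $ (2*r) = u $ r * ?v $ 0" "kron_vec u ?v $ (2*r+1) = u $ r * ?v $ 1"
        using r du dvec_facts(1) by (simp_all add: kron_vec_idx)
      thus "?P $$ (i,2*r) * kron_vec u ?v $ (2*r) + ?P $$ (i,2*r+1) * kron_vec u ?v $ (2*r+1) =
            ?P $$ (i,2*r) * (u$r * ?v$0) + ?P $$ (i,2*r+1) * (u$r * ?v$1)" by simp
    qed simp
    finally show ?thesis .
  qed
  have Uu: "(U *\<^sub>v u) $ p = (\<Sum>r<d. (A$$(p,r) + ?w * B$$(p,r)) * u$r)" if p: "p < d" for p
  proof -
    have "(U *\<^sub>v u) $ p = (\<Sum>r<d. U$$(p,r) * u$r)" by (rule mult_vec_idx[OF Uc du p])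
    also have "\<dots> = (\<Sum>r<d. (A$$(p,r) + ?w * B$$(p,r)) * u$r)"
      by (rule sum.cong) (simp_all add: U U_idx[OF B] p)
    finally show ?thesis .
  qed
  have R: "kron_vec (U *\<^sub>v u) ?v $ i = (U *\<^sub>v u) $ (i div 2) * ?v $ (i mod 2)" if i: "i < d*2" for i
    using i Uc dvec_facts(1) by (simp add: kron_vec_idx)
  show ?thesis
  proof (rule eq_vecI)
    show "dim_vec (?P *\<^sub>v kron_vec u ?v) = dim_vec (kron_vec (U *\<^sub>v u) ?v)" using Pc dkv2 by simp
    fix i assume "i < dim_vec (kron_vec (U *\<^sub>v u) ?v)"
    hence i: "i < d*2" using dkv2 by simp
    obtain p where p: "p < d" "i = 2*p \<or> i = 2*p+1" using idx_cases[OF i] by blast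
    from p(2) show "(?P *\<^sub>v kron_vec u ?v) $ i = kron_vec (U *\<^sub>v u) ?v $ i"
    proof
      assume ip: "i = 2*p"
      have "(?P *\<^sub>v kron_vec u ?v) $ i = (\<Sum>r<d. (A$$(p,r) + ?w * B$$(p,r)) * u$r * ?v$0)"
        unfolding L[OF i] unfolding ip
      proof (rule sum.cong)
        fix r assume "r \<in> {..<d}" hence r: "r < d" by simp
        show "?P $$ (2*p,2*r) * (u$r * ?v$0) + ?P $$ (2*p,2*r+1) * (u$r * ?v$1) =
              (A$$(p,r) + ?w * B$$(p,r)) * u$r * ?v$0"
          unfolding bl0(1)[OF p(1) r] bl0(2)[OF p(1) r] dv1 by (simp add: algebra_simps)
      qed simp
      also have "\<dots> = (U *\<^sub>v u) $ p * ?v$0" unfolding Uu[OF p(1)] sum_distrib_right ..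
      also have "\<dots> = kron_vec (U *\<^sub>v u) ?v $ i" using R[OF i] unfolding ip by simp
      finally show ?thesis .
    next
      assume ip: "i = 2*p+1"
      have "(?P *\<^sub>v kron_vec u ?v) $ i = (\<Sum>r<d. (A$$(p,r) + ?w * B$$(p,r)) * u$r * ?v$1)"
        unfolding L[OF i] unfolding ip
      proof (rule sum.cong)
        fix r assume "r \<in> {..<d}" hence r: "r < d" by simp
        have "(A$$(p,r) + ?w * B$$(p,r)) * u$r * ?v$1 = A$$(p,r) * u$r * ?v$1 + (?w * ?w) * B$$(p,r) * u$r * ?v$0"
          unfolding dv1 by (simp add: algebra_simps)
        also have "\<dots> = A$$(p,r) * u$r * ?v$1 + ?g * B$$(p,r) * u$r * ?v$0" unfolding zf(1) ..
        finally have e: "(A$$(p,r) + ?w * B$$(p,r)) * u$r * ?v$1 = A$$(p,r) * u$r * ?v$1 + ?g * B$$(p,r) * u$r * ?v$0" .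
        show "?P $$ (2*p+1,2*r) * (u$r * ?v$0) + ?P $$ (2*p+1,2*r+1) * (u$r * ?v$1) =
              (A$$(p,r) + ?w * B$$(p,r)) * u$r * ?v$1"
          unfolding e bl0(3)[OF p(1) r] bl0(4)[OF p(1) r] by (simp add: algebra_simps)
      qed simp
      also have "\<dots> = (U *\<^sub>v u) $ p * ?v$1" unfolding Uu[OF p(1)] sum_distrib_right ..
      also have "\<dots> = kron_vec (U *\<^sub>v u) ?v $ i" using R[OF i] unfolding ip by simp
      finally show ?thesis .
    qed
  qed
qed

lemma Gamma_in: "s < 2 \<Longrightarrow> t < 2 \<Longrightarrow> Gamma k $$ (s,t) \<in> Rring (3*2^(k-1))"
proof -
  assume s: "s < 2" and t: "t < 2"
  have "s = 0 \<or> s = 1" "t = 0 \<or> t = 1" using s t by auto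
  thus ?thesis using Gamma_idx[of k] Rring_0 Rring_1 Rring_zeta by auto
qed

lemma psi_entries:
  assumes dec: "decomp k U = (A,B)" and A: "A \<in> carrier_mat d d" and B: "B \<in> carrier_mat d d"
    and eA: "entries_in A (Rring (3*2^(k-1)))" and eB: "entries_in B (Rring (3*2^(k-1)))"
  shows "entries_in (psi k U) (Rring (3*2^(k-1)))"
proof -
  have Pc: "psi k U \<in> carrier_mat (d*2) (d*2)" by (rule psi_carrier[OF dec A B])
  show ?thesis unfolding entries_in_def
  proof (intro allI impI)
    fix i j assume "i < dim_row (psi k U)" "j < dim_col (psi k U)"
    hence ij: "i < d*2" "j < d*2" using Pc by auto
    have pq: "i div 2 < d" "j div 2 < d" using ij by auto
    have m2: "i mod 2 < 2" "j mod 2 < 2" by auto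
    have d01: "(if i mod 2 = j mod 2 then 1 else 0) \<in> Rring (3*2^(k-1))" using Rring_0 Rring_1 by simp
    show "psi k U $$ (i,j) \<in> Rring (3*2^(k-1))"
      unfolding psi_idx[OF dec A B ij]
      by (intro Rring_add Rring_mult entry_in[OF eA A pq] entry_in[OF eB B pq] d01 Gamma_in m2)
  qed
qed

theorem proposition5p4:
  fixes k :: nat
  assumes "k \<ge> 2"
  shows "catalytic_embedding 2 (unitaries_over (3 * 2^k)) (unitaries_over (3 * 2^(k-1))) (psi k) (dvec k)"
proof -
  have c1: "dim_vec (dvec k) = 2" by (rule dvec_facts)
  have "(\<Sum>i<dim_vec (dvec k). (cmod (dvec k $ i))^2) = (cmod (dvec k $ 0))^2 + (cmod (dvec k $ 1))^2"
    unfolding c1 by (simp add: numeral_2_eq_2)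
  also have "\<dots> = 1" unfolding dvec_facts by (simp add: norm_divide norm_zeta power_divide)
  finally have c2: "(\<Sum>i<dim_vec (dvec k). (cmod (dvec k $ i))^2) = 1" .
  have c3: "\<forall>U\<in>unitaries_over (3 * 2^k). psi k U \<in> unitaries_over (3 * 2^(k-1)) \<and>
        (\<forall>d. U \<in> carrier_mat d d \<longrightarrow>
           psi k U \<in> carrier_mat (2 * d) (2 * d) \<and>
           (\<forall>u \<in> carrier_vec d. psi k U *\<^sub>v kron_vec u (dvec k) = kron_vec (U *\<^sub>v u) (dvec k)))"
  proof
    fix U assume "U \<in> unitaries_over (3 * 2^k)"
    hence uU: "unitary_mat U" and eU: "entries_in U (Rring (3*2^k))" by (simp_all add: unitaries_over_def)
    let ?d = "dim_row U"
    have sq: "dim_col U = ?d" using uU unfolding unitary_mat_def by simp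
    obtain A B where A0: "A \<in> carrier_mat (dim_row U) (dim_col U)" and B0: "B \<in> carrier_mat (dim_row U) (dim_col U)"
      and eA: "entries_in A (Rring (3*2^(k-1)))" and eB: "entries_in B (Rring (3*2^(k-1)))"
      and U: "U = A + zeta (3*2^k) \<cdot>\<^sub>m B"
      using decomp_exists[OF assms eU] by blast
    have dec: "decomp k U = (A,B)" by (rule decomp_eq[OF assms A0 B0 eA eB U])
    have A: "A \<in> carrier_mat ?d ?d" using A0 sq by simp
    have B: "B \<in> carrier_mat ?d ?d" using B0 sq by simp
    have uu1: "adj U * U = 1\<^sub>m ?d" and uu2: "U * adj U = 1\<^sub>m ?d" using uU unfolding unitary_mat_def by simp_all
    have Pc: "psi k U \<in> carrier_mat (?d*2) (?d*2)" by (rule psi_carrier[OF dec A B])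
    note pu = psi_unitary[OF assms A B eA eB dec U uu1 uu2]
    have "unitary_mat (psi k U)" unfolding unitary_mat_def using Pc pu by auto
    moreover have "entries_in (psi k U) (Rring (3*2^(k-1)))" by (rule psi_entries[OF dec A B eA eB])
    ultimately show "psi k U \<in> unitaries_over (3 * 2^(k-1)) \<and>
        (\<forall>d. U \<in> carrier_mat d d \<longrightarrow>
           psi k U \<in> carrier_mat (2 * d) (2 * d) \<and>
           (\<forall>u \<in> carrier_vec d. psi k U *\<^sub>v kron_vec u (dvec k) = kron_vec (U *\<^sub>v u) (dvec k)))"
    proof (intro conjI allI impI ballI)
      assume "unitary_mat (psi k U)" "entries_in (psi k U) (Rring (3*2^(k-1)))"
      thus "psi k U \<in> unitaries_over (3 * 2^(k-1))" unfolding unitaries_over_def by simp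
    next
      fix d assume "U \<in> carrier_mat d d"
      hence "d = ?d" by auto
      thus "psi k U \<in> carrier_mat (2 * d) (2 * d)" using Pc by (simp add: mult.commute)
    next
      fix d and u :: "complex vec" assume "U \<in> carrier_mat d d" "u \<in> carrier_vec d"
      hence "d = ?d" "u \<in> carrier_vec ?d" by auto
      thus "psi k U *\<^sub>v kron_vec u (dvec k) = kron_vec (U *\<^sub>v u) (dvec k)"
        using psi_cat[OF assms A B dec U] by simp
    qed
  qed
  show ?thesis unfolding catalytic_embedding_def by (intro conjI c1 c2 c3)
qed

end
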